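(* Let $A=\{\mathbf{a}_1,\dots,\mathbf{a}_n\}\subseteq\mathbb{R}^d$ with hidden partition $\mathcal{V}=\{V_1,\dots,V_K\}$, and weights $w_{ij}=w_{ji}\ge0$, satisfying the three standing assumptions (distinct centroids, weight condition, $n>K(K+1)$) below; let $\gamma_{\min},\gamma_{\max},\gamma_{\max2},r,r_2$ be as below. Let $p>2$, $\delta:=2/n^p$, and for $\epsilon\in(0,1)$ let $\mathcal{D}_{\epsilon,\delta}$ be a DJL distribution over $\mathbb{R}^{m\times d}$ with $m=O(p\epsilon^{-2}\log n)$, where the implicit absolute constant $c$ is the same one used in $\epsilon_{\min}:=\sqrt{c\,p\log(n)/d}$; assume $m<d$ (equivalently $\epsilon_{\min}<1$ and $\epsilon\in(\epsilon_{\min},1)$). Define $\epsilon_{\sup}:=\frac{r^2-1}{r^2+1}$ and $\epsilon_{\sup2}:=\frac{r_2^2-1}{r_2^2+1}$. Let $\Pi$ be drawn from $\mathcal{D}_{\epsilon,\delta}$, and for $\gamma\ge0$ let $\hat\phi_\gamma(\mathbf{a}_i):=\hat{\mathbf{x}}_i^*(\gamma)$, where $\{\hat{\mathbf{x}}_i^*(\gamma)\}$ is the optimal solution of the randomly projected convex clustering model with $\Pi$ and $\gamma$. Then: 1. If $r>\sqrt{\frac{1+\epsilon_{\min}}{1-\epsilon_{\min}}}$, then $\epsilon_{\min}<\epsilon_{\sup}$, and for any $\epsilon\in[\epsilon_{\min},\epsilon_{\sup})$ and any $\hat\gamma\in[\sqrt{1+\epsilon}\,\gamma_{\min},\sqrt{1-\epsilon}\,\gamma_{\max})$,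 with probability greater than $1-n^{-(p-2)}$ the map $\hat\phi_{\hat\gamma}$ perfectly recovers $\mathcal{V}$. 2. If $r_2>\sqrt{\frac{1+\epsilon_{\min}}{1-\epsilon_{\min}}}$, then $\epsilon_{\min}<\epsilon_{\sup2}$, and for any $\epsilon\in[\epsilon_{\min},\epsilon_{\sup2})$ and any $\hat\gamma\in[\sqrt{1+\epsilon}\,\gamma_{\min},\sqrt{1-\epsilon}\,\gamma_{\max2})$, with probability greater than $1-n^{-(p-2)}$ the map $\hat\phi_{\hat\gamma}$ recovers a non-trivial coarsening of $\mathcal{V}$.
   Context: $\|\cdot\|$ is the Euclidean norm. Notation: $I_\alpha:=\{i:\mathbf{a}_i\in V_\alpha\}$, $n_\alpha:=|I_\alpha|$, $\mathbf{a}^{(\alpha)}:=\frac1{n_\alpha}\sum_{i\in I_\alpha}\mathbf{a}_i$ ($1\le\alpha\le K$), $\mathbf{a}^{(0)}:=\frac1n\sum_i\mathbf{a}_i$; $w^{(\alpha,\beta)}:=\sum_{i\in I_\alpha}\sum_{j\in I_\beta}w_{ij}$; $\bar w^{(\beta)}:=\frac1{n_\beta}\sum_{l\ne\beta}w^{(\beta,l)}$; $w_i^{(\beta)}:=\sum_{j\in I_\beta}w_{ij}$; $\mu_{ij}^{(\alpha)}:=\sum_{\beta\ne\alpha}|w_i^{(\beta)}-w_j^{(\beta)}|$ for $i,j\in I_\alpha$. Standing assumptions: (i) $\mathbf{a}^{(0)},\mathbf{a}^{(1)},\dots,\mathbf{a}^{(K)}$ are pairwise distinct; (ii) $w_{ij}>0$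 and $n_\alpha w_{ij}>\mu_{ij}^{(\alpha)}$ for all distinct $i,j\in I_\alpha$, $1\le\alpha\le K$; (iii) $n>K(K+1)$. Quantities: $\gamma_{\min}:=\max_{\alpha}\max_{i\ne j\in I_\alpha}\frac{\|\mathbf{a}_i-\mathbf{a}_j\|}{n_\alpha w_{ij}-\mu_{ij}^{(\alpha)}}$, $\gamma_{\max}:=\min_{1\le\alpha<\beta\le K}\frac{\|\mathbf{a}^{(\alpha)}-\mathbf{a}^{(\beta)}\|}{\bar w^{(\alpha)}+\bar w^{(\beta)}}$, $\gamma_{\max2}:=\max_{1\le\alpha\le K}\frac{\|\mathbf{a}^{(0)}-\mathbf{a}^{(\alpha)}\|}{\bar w^{(\alpha)}}$, $r:=\gamma_{\max}/\gamma_{\min}$, $r_2:=\gamma_{\max2}/\gamma_{\min}$. Randomly projected convex clustering model with $\Pi\in\mathbb{R}^{m\times d}$ and $\gamma\ge0$: $\min_{\hat{\mathbf{x}}_1,\dots,\hat{\mathbf{x}}_n\in\mathbb{R}^m}\frac12\sum_{i=1}^n\|\hat{\mathbf{x}}_i-\Pi\mathbf{a}_i\|^2+\gamma\sum_{i<j}w_{ij}\|\hat{\mathbf{x}}_i-\hat{\mathbf{x}}_j\|$ (strongly convex, unique solution). A map $\psi$ on $A$ perfectly recovers $\mathcal{V}$ if $\psi(\mathbf{a}_i)=\psi(\mathbf{a}_j)$ iff $\mathbf{a}_i,\mathbf{a}_j$ lie in the same $V_\alpha$. A partition $\{W_1,\dots,W_L\}$ of $A$ is a coarsening of $\mathcal{V}$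 if there is a partition $\{\alpha_1,\dots,\alpha_L\}$ of $\{1,\dots,K\}$ with $W_l=\bigcup_{i\in\alpha_l}V_i$; it is non-trivial if $L>1$; $\psi$ recovers it if it is the partition of $A$ into level sets of $\psi$. A DJL distribution $\mathcal{D}_{\epsilon,\delta}$ is a distribution over $\Pi\in\mathbb{R}^{m\times d}$ with $\mathbb{P}[\,|\|\Pi z\|^2-1|>\epsilon\,]<\delta$ for every unit $z\in\mathbb{R}^d$. *)

theory Defs
  imports "HOL-Probability.Probability"
begin

text \<open>Data: points a 0, ..., a (n-1) (0-based indices), hidden partition blocks
  V 1, ..., V K, weights w i j.\<close>

definition Iset :: "(nat \<Rightarrow> 'a) \<Rightarrow> nat \<Rightarrow> (nat \<Rightarrow> 'a set) \<Rightarrow> nat \<Rightarrow> nat set" where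
  "Iset a n V \<alpha> = {i \<in> {..<n}. a i \<in> V \<alpha>}"

definition nsz :: "(nat \<Rightarrow> 'a) \<Rightarrow> nat \<Rightarrow> (nat \<Rightarrow> 'a set) \<Rightarrow> nat \<Rightarrow> nat" where
  "nsz a n V \<alpha> = card (Iset a n V \<alpha>)"

definition cent :: "(nat \<Rightarrow> 'a::real_vector) \<Rightarrow> nat \<Rightarrow> (nat \<Rightarrow> 'a set) \<Rightarrow> nat \<Rightarrow> 'a" where
  "cent a n V \<alpha> = (if \<alpha> = 0 then (1 / real n) *\<^sub>R (\<Sum>i<n. a i)
     else (1 / real (nsz a n V \<alpha>)) *\<^sub>R (\<Sum>i\<in>Iset a n V \<alpha>. a i))"

definition wblock :: "(nat \<Rightarrow> 'a) \<Rightarrow> nat \<Rightarrow> (nat \<Rightarrow> 'a set) \<Rightarrow> (nat \<Rightarrow> nat \<Rightarrow> real) \<Rightarrow> nat \<Rightarrow> nat \<Rightarrow> real" where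
  "wblock a n V w \<alpha> \<beta> = (\<Sum>i\<in>Iset a n V \<alpha>. \<Sum>j\<in>Iset a n V \<beta>. w i j)"

definition wbar :: "(nat \<Rightarrow> 'a) \<Rightarrow> nat \<Rightarrow> (nat \<Rightarrow> 'a set) \<Rightarrow> nat \<Rightarrow> (nat \<Rightarrow> nat \<Rightarrow> real) \<Rightarrow> nat \<Rightarrow> real" where
  "wbar a n V K w \<beta> = (1 / real (nsz a n V \<beta>)) * (\<Sum>l\<in>{1..K} - {\<beta>}. wblock a n V w \<beta> l)"

definition wrow :: "(nat \<Rightarrow> 'a) \<Rightarrow> nat \<Rightarrow> (nat \<Rightarrow> 'a set) \<Rightarrow> (nat \<Rightarrow> nat \<Rightarrow> real) \<Rightarrow> nat \<Rightarrow> nat \<Rightarrow> real" where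
  "wrow a n V w i \<beta> = (\<Sum>j\<in>Iset a n V \<beta>. w i j)"

definition mu :: "(nat \<Rightarrow> 'a) \<Rightarrow> nat \<Rightarrow> (nat \<Rightarrow> 'a set) \<Rightarrow> nat \<Rightarrow> (nat \<Rightarrow> nat \<Rightarrow> real) \<Rightarrow> nat \<Rightarrow> nat \<Rightarrow> nat \<Rightarrow> real" where
  "mu a n V K w \<alpha> i j = (\<Sum>\<beta>\<in>{1..K} - {\<alpha>}. \<bar>wrow a n V w i \<beta> - wrow a n V w j \<beta>\<bar>)"

definition gamma_min :: "(nat \<Rightarrow> 'a::real_normed_vector) \<Rightarrow> nat \<Rightarrow> (nat \<Rightarrow> 'a set) \<Rightarrow> nat \<Rightarrow> (nat \<Rightarrow> nat \<Rightarrow> real) \<Rightarrow> real" where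
  "gamma_min a n V K w = Max {norm (a i - a j) / (real (nsz a n V \<alpha>) * w i j - mu a n V K w \<alpha> i j) | \<alpha> i j.
      \<alpha> \<in> {1..K} \<and> i \<in> Iset a n V \<alpha> \<and> j \<in> Iset a n V \<alpha> \<and> i \<noteq> j}"

definition gamma_max :: "(nat \<Rightarrow> 'a::real_normed_vector) \<Rightarrow> nat \<Rightarrow> (nat \<Rightarrow> 'a set) \<Rightarrow> nat \<Rightarrow> (nat \<Rightarrow> nat \<Rightarrow> real) \<Rightarrow> real" where
  "gamma_max a n V K w = Min {norm (cent a n V \<alpha> - cent a n V \<beta>) / (wbar a n V K w \<alpha> + wbar a n V K w \<beta>) | \<alpha> \<beta>.
      1 \<le> \<alpha> \<and> \<alpha> < \<beta> \<and> \<beta> \<le> K}"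

definition gamma_max2 :: "(nat \<Rightarrow> 'a::real_normed_vector) \<Rightarrow> nat \<Rightarrow> (nat \<Rightarrow> 'a set) \<Rightarrow> nat \<Rightarrow> (nat \<Rightarrow> nat \<Rightarrow> real) \<Rightarrow> real" where
  "gamma_max2 a n V K w = Max {norm (cent a n V 0 - cent a n V \<alpha>) / wbar a n V K w \<alpha> | \<alpha>. \<alpha> \<in> {1..K}}"

definition cc_obj :: "(nat \<Rightarrow> 'b::real_normed_vector) \<Rightarrow> nat \<Rightarrow> (nat \<Rightarrow> nat \<Rightarrow> real) \<Rightarrow> real \<Rightarrow> (nat \<Rightarrow> 'b) \<Rightarrow> real" where
  "cc_obj b n w \<gamma> x = (1/2) * (\<Sum>i<n. (norm (x i - b i))\<^sup>2)
      + \<gamma> * (\<Sum>i<n. \<Sum>j\<in>{i<..<n}. w i j * norm (x i - x j))"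

definition is_cc_opt :: "(nat \<Rightarrow> 'b::real_normed_vector) \<Rightarrow> nat \<Rightarrow> (nat \<Rightarrow> nat \<Rightarrow> real) \<Rightarrow> real \<Rightarrow> (nat \<Rightarrow> 'b) \<Rightarrow> bool" where
  "is_cc_opt b n w \<gamma> x \<longleftrightarrow> (\<forall>y. cc_obj b n w \<gamma> x \<le> cc_obj b n w \<gamma> y)"

definition proj_cc_solution :: "real^'d^'m \<Rightarrow> (nat \<Rightarrow> real^'d) \<Rightarrow> nat \<Rightarrow> (nat \<Rightarrow> nat \<Rightarrow> real) \<Rightarrow> real \<Rightarrow> (nat \<Rightarrow> real^'m) \<Rightarrow> bool" where
  "proj_cc_solution P a n w \<gamma> x \<longleftrightarrow> is_cc_opt (\<lambda>i. P *v a i) n w \<gamma> x"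

definition perfectly_recovers :: "(nat \<Rightarrow> 'a) \<Rightarrow> nat \<Rightarrow> (nat \<Rightarrow> 'a set) \<Rightarrow> nat \<Rightarrow> (nat \<Rightarrow> 'b) \<Rightarrow> bool" where
  "perfectly_recovers a n V K x \<longleftrightarrow>
     (\<forall>i<n. \<forall>j<n. x i = x j \<longleftrightarrow> (\<exists>\<alpha>\<in>{1..K}. a i \<in> V \<alpha> \<and> a j \<in> V \<alpha>))"

definition level_partition :: "(nat \<Rightarrow> 'a) \<Rightarrow> nat \<Rightarrow> (nat \<Rightarrow> 'b) \<Rightarrow> 'a set set" where
  "level_partition a n x = (\<lambda>i. a ` {j \<in> {..<n}. x j = x i}) ` {..<n}"

definition is_coarsening :: "'a set set \<Rightarrow> (nat \<Rightarrow> 'a set) \<Rightarrow> nat \<Rightarrow> bool" where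
  "is_coarsening W V K \<longleftrightarrow> (\<exists>P. partition_on {1..K} P \<and> W = (\<lambda>S. \<Union>\<alpha>\<in>S. V \<alpha>) ` P)"

definition recovers_nontrivial_coarsening :: "(nat \<Rightarrow> 'a) \<Rightarrow> nat \<Rightarrow> (nat \<Rightarrow> 'a set) \<Rightarrow> nat \<Rightarrow> (nat \<Rightarrow> 'b) \<Rightarrow> bool" where
  "recovers_nontrivial_coarsening a n V K x \<longleftrightarrow>
     is_coarsening (level_partition a n x) V K \<and> card (level_partition a n x) > 1"

definition DJL :: "(real^'d^'m) measure \<Rightarrow> real \<Rightarrow> real \<Rightarrow> bool" where
  "DJL M \<epsilon> \<delta> \<longleftrightarrow> prob_space M \<and> sets M = sets borel \<and>
     (\<forall>z::real^'d. norm z = 1 \<longrightarrow> measure M {P \<in> space M. \<bar>(norm (P *v z))\<^sup>2 - 1\<bar> > \<epsilon>} < \<delta>)"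

end

theory Submission
  imports Defs
begin

lemma sum_sym_half:
  fixes g :: "nat \<Rightarrow> nat \<Rightarrow> real"
  shows "(\<And>i j. i < n \<Longrightarrow> j < n \<Longrightarrow> g i j = g j i) \<Longrightarrow>
    (\<Sum>i<n. \<Sum>j<n. g i j) = 2 * (\<Sum>i<n. \<Sum>j\<in>{i<..<n}. g i j) + (\<Sum>i<n. g i i)"
proof (induction n)
  case 0 then show ?case by simp
next
  case (Suc n)
  have e: "\<And>i. i < n \<Longrightarrow> {i<..<Suc n} = insert n {i<..<n}" by auto
  have "(\<Sum>i<Suc n. \<Sum>j\<in>{i<..<Suc n}. g i j) = (\<Sum>i<n. \<Sum>j\<in>{i<..<Suc n}. g i j)"
  proof -
    have "{n<..<Suc n} = {}" by auto
    then show ?thesis by simp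
  qed
  also have "\<dots> = (\<Sum>i<n. g i n + (\<Sum>j\<in>{i<..<n}. g i j))"
    by (intro sum.cong refl) (simp add: e)
  finally have A: "(\<Sum>i<Suc n. \<Sum>j\<in>{i<..<Suc n}. g i j) = (\<Sum>i<n. g i n) + (\<Sum>i<n. \<Sum>j\<in>{i<..<n}. g i j)"
    by (simp add: sum.distrib)
  have B: "(\<Sum>i<Suc n. \<Sum>j<Suc n. g i j) = (\<Sum>i<n. \<Sum>j<n. g i j) + (\<Sum>i<n. g i n) + (\<Sum>j<n. g n j) + g n n"
    by (simp add: sum.distrib)
  have C: "(\<Sum>j<n. g n j) = (\<Sum>i<n. g i n)" using Suc.prems by simp
  have IH: "(\<Sum>i<n. \<Sum>j<n. g i j) = 2 * (\<Sum>i<n. \<Sum>j\<in>{i<..<n}. g i j) + (\<Sum>i<n. g i i)"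
    using Suc by simp
  show ?case using IH A B C by simp
qed

definition pen :: "nat \<Rightarrow> (nat \<Rightarrow> nat \<Rightarrow> real) \<Rightarrow> (nat \<Rightarrow> 'b::real_normed_vector) \<Rightarrow> real" where
  "pen n w u = (\<Sum>i<n. \<Sum>j<n. w i j * norm (u i - u j))"

lemma cc_obj_pen:
  assumes "\<forall>i<n. \<forall>j<n. w i j = w j i"
  shows "cc_obj b n w \<gamma> u = (1/2) * (\<Sum>i<n. (norm (u i - b i))\<^sup>2) + (\<gamma>/2) * pen n w u"
proof -
  have "pen n w u = 2 * (\<Sum>i<n. \<Sum>j\<in>{i<..<n}. w i j * norm (u i - u j))"
    unfolding pen_def
    by (subst sum_sym_half) (use assms in \<open>auto simp: norm_minus_commute\<close>)
  then show ?thesis unfolding cc_obj_def by simp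
qed

lemma norm_add_sq: "(norm (u + v))\<^sup>2 = (norm u)\<^sup>2 + (norm v)\<^sup>2 + 2 * inner u (v::'a::real_inner)"
  by (simp add: power2_norm_eq_inner inner_add_left inner_add_right inner_commute)

lemma inner_sgn_self: "inner (sgn v) v = norm (v::'a::real_inner)"
proof (cases "v = 0")
  case False
  then show ?thesis by (simp add: sgn_div_norm inner_scaleR_left power2_norm_eq_inner[symmetric] power2_eq_square)
qed simp

lemma norm_sgn_le: "norm (sgn (v::'a::real_normed_vector)) \<le> 1"
  by (simp add: norm_sgn)

lemma swap_cl:
  fixes n :: nat and f :: "nat \<Rightarrow> nat \<Rightarrow> 'a::comm_monoid_add"
  shows
  "(\<Sum>i<n. \<Sum>j\<in>{j. j<n \<and> cl j = cl i}. f i j) = (\<Sum>j<n. \<Sum>i\<in>{i. i<n \<and> cl i = cl j}. f i j)"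
proof -
  have "(\<Sum>i<n. \<Sum>j\<in>{j. j<n \<and> cl j = cl i}. f i j) = (\<Sum>i<n. \<Sum>j<n. if cl j = cl i then f i j else 0)"
  proof (rule sum.cong[OF refl])
    fix i
    have "{j. j<n \<and> cl j = cl i} = {j\<in>{..<n}. cl j = cl i}" by auto
    then show "(\<Sum>j\<in>{j. j<n \<and> cl j = cl i}. f i j) = (\<Sum>j<n. if cl j = cl i then f i j else 0)"
      by (subst sum.inter_filter[symmetric]) (auto intro!: sum.cong)
  qed
  also have "\<dots> = (\<Sum>j<n. \<Sum>i<n. if cl j = cl i then f i j else 0)" by (rule sum.swap)
  also have "\<dots> = (\<Sum>j<n. \<Sum>i\<in>{i. i<n \<and> cl i = cl j}. f i j)"
  proof (rule sum.cong[OF refl])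
    fix j
    have "{i. i<n \<and> cl i = cl j} = {i\<in>{..<n}. cl j = cl i}" by auto
    then show "(\<Sum>i<n. if cl j = cl i then f i j else 0) = (\<Sum>i\<in>{i. i<n \<and> cl i = cl j}. f i j)"
      by (subst sum.inter_filter[symmetric]) (auto intro!: sum.cong)
  qed
  finally show ?thesis .
qed


lemma core_const:
  fixes b x :: "nat \<Rightarrow> 'v::real_inner" and cl :: "nat \<Rightarrow> nat" and T :: "nat set"
  assumes fT: "finite T" and clT: "\<forall>i<n. cl i \<in> T"
    and w: "\<forall>i<n. \<forall>j<n. w i j = w j i \<and> 0 \<le> w i j" and g: "0 \<le> \<gamma>"
    and cond: "\<forall>i<n. \<forall>j<n. cl i = cl j \<and> i \<noteq> j \<longrightarrow>
        norm (b i - b j) + \<gamma> * (\<Sum>\<beta>\<in>T - {cl i}. \<bar>(\<Sum>l\<in>{l. l<n \<and> cl l = \<beta>}. w i l) - (\<Sum>l\<in>{l. l<n \<and> cl l = \<beta>}. w j l)\<bar>)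
          \<le> \<gamma> * (real (card {l. l<n \<and> cl l = cl i}) * w i j)"
    and opt: "is_cc_opt b n w \<gamma> x"
  shows "\<forall>i<n. \<forall>j<n. cl i = cl j \<longrightarrow> x i = x j"
proof -
  define C where "C \<alpha> = {l. l<n \<and> cl l = \<alpha>}" for \<alpha>
  define N where "N \<alpha> = real (card (C \<alpha>))" for \<alpha>
  define Y where "Y \<alpha> = (1 / N \<alpha>) *\<^sub>R (\<Sum>l\<in>C \<alpha>. x l)" for \<alpha>
  define y where "y i = Y (cl i)" for i
  define d where "d i = x i - y i" for i
  define Z where "Z i j = sgn (y i - y j)" for i j
  define s where "s i = (\<Sum>l<n. w i l *\<^sub>R Z i l)" for i
  define q where "q i = y i - b i + \<gamma> *\<^sub>R s i" for i
  have finC: "finite (C \<alpha>)" for \<alpha> unfolding C_def by auto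
  have inC: "i < n \<Longrightarrow> i \<in> C (cl i)" for i unfolding C_def by auto
  have Npos: "i < n \<Longrightarrow> N (cl i) > 0" for i
    unfolding N_def using inC[of i] finC card_gt_0_iff by fastforce
  have yC: "j \<in> C (cl i) \<Longrightarrow> y j = y i" for i j unfolding C_def y_def by auto
  have dsum: "(\<Sum>l\<in>C (cl i). d l) = 0" if "i < n" for i
  proof -
    have "(\<Sum>l\<in>C (cl i). d l) = (\<Sum>l\<in>C (cl i). x l) - (\<Sum>l\<in>C (cl i). y l)"
      unfolding d_def by (simp add: sum_subtractf)
    also have "(\<Sum>l\<in>C (cl i). y l) = (\<Sum>l\<in>C (cl i). Y (cl i))"
      by (rule sum.cong) (auto simp: y_def C_def)
    also have "\<dots> = N (cl i) *\<^sub>R Y (cl i)" by (simp add: N_def sum_constant_scaleR)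
    also have "\<dots> = (\<Sum>l\<in>C (cl i). x l)" using Npos[OF that] by (simp add: Y_def)
    finally show ?thesis by simp
  qed
  have wsym: "\<And>i j. i<n \<Longrightarrow> j<n \<Longrightarrow> w i j = w j i" using w by auto
  have wnn: "\<And>i j. i<n \<Longrightarrow> j<n \<Longrightarrow> 0 \<le> w i j" using w by auto
  have obj: "\<And>u. cc_obj b n w \<gamma> u = (1/2) * (\<Sum>i<n. (norm (u i - b i))\<^sup>2) + (\<gamma>/2) * pen n w u"
    by (rule cc_obj_pen) (use w in auto)
  have Q: "(\<Sum>i<n. (norm (x i - b i))\<^sup>2) = (\<Sum>i<n. (norm (y i - b i))\<^sup>2) + (\<Sum>i<n. (norm (d i))\<^sup>2)
           + 2 * (\<Sum>i<n. inner (d i) (y i - b i))"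
  proof -
    have "\<And>i. (norm (x i - b i))\<^sup>2 = (norm (y i - b i))\<^sup>2 + (norm (d i))\<^sup>2 + 2 * inner (d i) (y i - b i)"
    proof -
      fix i
      have e: "x i - b i = d i + (y i - b i)" by (simp add: d_def)
      show "(norm (x i - b i))\<^sup>2 = (norm (y i - b i))\<^sup>2 + (norm (d i))\<^sup>2 + 2 * inner (d i) (y i - b i)"
        by (subst e, subst norm_add_sq) linarith
    qed
    then show ?thesis by (simp add: sum.distrib sum_distrib_left)
  qed
  have P1: "norm (x i - x j) \<ge> norm (y i - y j) + inner (Z i j) (d i - d j) + (if j \<in> C (cl i) then norm (d i - d j) else 0)"
    if "i < n" "j < n" for i j
  proof (cases "j \<in> C (cl i)")
    case True
    then have "y j = y i" by (rule yC)
    then show ?thesis using True by (simp add: Z_def d_def)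
  next
    case False
    have "inner (Z i j) (x i - x j) \<le> norm (Z i j) * norm (x i - x j)" by (rule norm_cauchy_schwarz)
    also have "\<dots> \<le> norm (x i - x j)" using norm_sgn_le[of "y i - y j"]
      by (simp add: Z_def mult_left_le_one_le)
    finally have "inner (Z i j) (x i - x j) \<le> norm (x i - x j)" .
    moreover have "x i - x j = (y i - y j) + (d i - d j)" by (simp add: d_def)
    moreover have "inner (Z i j) (y i - y j) = norm (y i - y j)" by (simp add: Z_def inner_sgn_self)
    ultimately show ?thesis using False by (simp add: inner_add_right)
  qed
  have P: "pen n w x \<ge> pen n w y + (\<Sum>i<n. \<Sum>j<n. w i j * inner (Z i j) (d i - d j))
                        + (\<Sum>i<n. \<Sum>j\<in>C (cl i). w i j * norm (d i - d j))"
  proof -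
    have "(\<Sum>i<n. \<Sum>j<n. w i j * (norm (y i - y j) + inner (Z i j) (d i - d j) + (if j \<in> C (cl i) then norm (d i - d j) else 0)))
        \<le> pen n w x"
      unfolding pen_def
      by (intro sum_mono mult_left_mono) (use P1 wnn in auto)
    moreover have "(\<Sum>j<n. w i j * (if j \<in> C (cl i) then norm (d i - d j) else 0)) = (\<Sum>j\<in>C (cl i). w i j * norm (d i - d j))" for i
    proof -
      have "C (cl i) = {j \<in> {..<n}. j \<in> C (cl i)}" by (auto simp: C_def)
      then have "(\<Sum>j\<in>C (cl i). w i j * norm (d i - d j)) = (\<Sum>j<n. if j \<in> C (cl i) then w i j * norm (d i - d j) else 0)"
        by (subst sum.inter_filter[symmetric]) auto
      moreover have "(\<Sum>j<n. w i j * (if j \<in> C (cl i) then norm (d i - d j) else 0)) = (\<Sum>j<n. if j \<in> C (cl i) then w i j * norm (d i - d j) else 0)"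
        by (rule sum.cong) auto
      ultimately show ?thesis by simp
    qed
    ultimately show ?thesis unfolding pen_def
      by (simp add: distrib_left sum.distrib)
  qed
  have F5: "(\<Sum>i<n. \<Sum>j<n. w i j * inner (Z i j) (d i - d j)) = 2 * (\<Sum>i<n. inner (d i) (s i))"
  proof -
    have Zs: "Z j i = - Z i j" for i j by (simp add: Z_def sgn_minus[symmetric])
    have A: "(\<Sum>i<n. \<Sum>j<n. w i j * inner (Z i j) (d i - d j))
       = (\<Sum>i<n. \<Sum>j<n. w i j * inner (Z i j) (d i)) - (\<Sum>i<n. \<Sum>j<n. w i j * inner (Z i j) (d j))"
      by (simp add: inner_diff_right right_diff_distrib sum_subtractf)
    have "(\<Sum>i<n. \<Sum>j<n. w i j * inner (Z i j) (d j)) = (\<Sum>j<n. \<Sum>i<n. w i j * inner (Z i j) (d j))"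
      by (rule sum.swap)
    also have "\<dots> = (\<Sum>j<n. \<Sum>i<n. - (w j i * inner (Z j i) (d j)))"
    proof (intro sum.cong[OF refl])
      fix j i assume "j \<in> {..<n}" "i \<in> {..<n}"
      then show "w i j * inner (Z i j) (d j) = - (w j i * inner (Z j i) (d j))"
        using Zs[of i j] wsym[of i j] by simp
    qed
    finally have B: "(\<Sum>i<n. \<Sum>j<n. w i j * inner (Z i j) (d j)) = - (\<Sum>i<n. \<Sum>j<n. w i j * inner (Z i j) (d i))"
      by (simp add: sum_negf)
    have C: "(\<Sum>i<n. \<Sum>j<n. w i j * inner (Z i j) (d i)) = (\<Sum>i<n. inner (d i) (s i))"
      by (simp add: s_def inner_sum_right inner_commute)
    show ?thesis using A B C by simp
  qed
  have F6: "(\<Sum>i<n. \<Sum>j\<in>C (cl i). inner (d i - d j) (q i - q j) / N (cl i)) = 2 * (\<Sum>i<n. inner (d i) (q i))"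
  proof -
    have cardC: "i < n \<Longrightarrow> real (card (C (cl i))) = N (cl i)" for i by (simp add: N_def)
    have exp: "inner (d i - d j) (q i - q j) / N (cl i) =
        inner (d i) (q i) / N (cl i) - inner (d i) (q j) / N (cl i) - inner (d j) (q i) / N (cl i) + inner (d j) (q j) / N (cl i)" for i j
      by (simp add: inner_diff_left inner_diff_right diff_divide_distrib add_divide_distrib)
    have Sa: "(\<Sum>i<n. \<Sum>j\<in>C (cl i). inner (d i) (q i) / N (cl i)) = (\<Sum>i<n. inner (d i) (q i))"
    proof (rule sum.cong[OF refl])
      fix i assume "i \<in> {..<n}"
      then have "N (cl i) > 0" "real (card (C (cl i))) = N (cl i)" using Npos cardC by auto
      then show "(\<Sum>j\<in>C (cl i). inner (d i) (q i) / N (cl i)) = inner (d i) (q i)" by simp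
    qed
    have Sc: "(\<Sum>i<n. \<Sum>j\<in>C (cl i). inner (d j) (q i) / N (cl i)) = 0"
    proof -
      have "(\<Sum>j\<in>C (cl i). inner (d j) (q i) / N (cl i)) = inner (\<Sum>j\<in>C (cl i). d j) (q i) / N (cl i)" for i
        by (simp add: inner_sum_left sum_divide_distrib)
      then show ?thesis using dsum by simp
    qed
    have swapC: "(\<Sum>i<n. \<Sum>j\<in>C (cl i). f i j) = (\<Sum>j<n. \<Sum>i\<in>C (cl j). f i j)" for f :: "nat \<Rightarrow> nat \<Rightarrow> real"
      unfolding C_def by (rule swap_cl)
    have Sb: "(\<Sum>i<n. \<Sum>j\<in>C (cl i). inner (d i) (q j) / N (cl i)) = 0"
    proof -
      have "(\<Sum>i<n. \<Sum>j\<in>C (cl i). inner (d i) (q j) / N (cl i)) = (\<Sum>j<n. \<Sum>i\<in>C (cl j). inner (d i) (q j) / N (cl i))"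
        by (rule swapC)
      also have "\<dots> = (\<Sum>j<n. \<Sum>i\<in>C (cl j). inner (d i) (q j) / N (cl j))"
        by (intro sum.cong refl) (auto simp: C_def)
      also have "\<dots> = (\<Sum>j<n. inner (\<Sum>i\<in>C (cl j). d i) (q j) / N (cl j))"
        by (simp add: inner_sum_left sum_divide_distrib)
      also have "\<dots> = 0" using dsum by simp
      finally show ?thesis .
    qed
    have Se: "(\<Sum>i<n. \<Sum>j\<in>C (cl i). inner (d j) (q j) / N (cl i)) = (\<Sum>i<n. inner (d i) (q i))"
    proof -
      have "(\<Sum>i<n. \<Sum>j\<in>C (cl i). inner (d j) (q j) / N (cl i)) = (\<Sum>j<n. \<Sum>i\<in>C (cl j). inner (d j) (q j) / N (cl i))"
        by (rule swapC)
      also have "\<dots> = (\<Sum>j<n. \<Sum>i\<in>C (cl j). inner (d j) (q j) / N (cl j))"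
        by (intro sum.cong refl) (auto simp: C_def)
      also have "\<dots> = (\<Sum>j<n. inner (d j) (q j))"
      proof (rule sum.cong[OF refl])
        fix i assume "i \<in> {..<n}"
        then have "N (cl i) > 0" "real (card (C (cl i))) = N (cl i)" using Npos cardC by auto
        then show "(\<Sum>ia\<in>C (cl i). inner (d i) (q i) / N (cl i)) = inner (d i) (q i)" by simp
      qed
      finally show ?thesis .
    qed
    show ?thesis
      by (simp only: exp sum.distrib sum_subtractf Sa Sb Sc Se)
  qed
  have F7: "inner (d i - d j) (q i - q j) / N (cl i) \<ge> - (\<gamma> * (w i j * norm (d i - d j)))"
    if "i < n" "j \<in> C (cl i)" for i j
  proof (cases "i = j")
    case True then show ?thesis by simp
  next
    case False
    have jn: "j < n" and clj: "cl j = cl i" using that by (auto simp: C_def)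
    have yji: "y j = y i" using yC[OF that(2)] .
    have Zeq: "Z j l = Z i l" for l by (simp add: Z_def yji)
    define c where "c \<beta> = (\<Sum>l\<in>C \<beta>. w i l) - (\<Sum>l\<in>C \<beta>. w j l)" for \<beta>
    have "s i - s j = (\<Sum>l<n. (w i l - w j l) *\<^sub>R Z i l)"
      by (simp add: s_def Zeq sum_subtractf scaleR_diff_left)
    also have "\<dots> = (\<Sum>\<beta>\<in>T. \<Sum>l\<in>{l\<in>{..<n}. cl l = \<beta>}. (w i l - w j l) *\<^sub>R Z i l)"
      by (rule sum.group[symmetric]) (use fT clT in auto)
    also have "\<dots> = (\<Sum>\<beta>\<in>T. c \<beta> *\<^sub>R sgn (Y (cl i) - Y \<beta>))"
    proof (rule sum.cong[OF refl])
      fix \<beta>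
      have "(\<Sum>l\<in>{l\<in>{..<n}. cl l = \<beta>}. (w i l - w j l) *\<^sub>R Z i l) = (\<Sum>l\<in>C \<beta>. (w i l - w j l) *\<^sub>R sgn (Y (cl i) - Y \<beta>))"
        by (rule sum.cong) (auto simp: C_def Z_def y_def)
      also have "\<dots> = c \<beta> *\<^sub>R sgn (Y (cl i) - Y \<beta>)"
        by (simp add: c_def scaleR_sum_left[symmetric] sum_subtractf)
      finally show "(\<Sum>l\<in>{l\<in>{..<n}. cl l = \<beta>}. (w i l - w j l) *\<^sub>R Z i l) = c \<beta> *\<^sub>R sgn (Y (cl i) - Y \<beta>)" .
    qed
    finally have sdiff: "s i - s j = (\<Sum>\<beta>\<in>T. c \<beta> *\<^sub>R sgn (Y (cl i) - Y \<beta>))" .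
    have "norm (s i - s j) \<le> (\<Sum>\<beta>\<in>T. norm (c \<beta> *\<^sub>R sgn (Y (cl i) - Y \<beta>)))"
      unfolding sdiff by (rule norm_sum)
    also have "\<dots> = norm (c (cl i) *\<^sub>R sgn (Y (cl i) - Y (cl i))) + (\<Sum>\<beta>\<in>T - {cl i}. norm (c \<beta> *\<^sub>R sgn (Y (cl i) - Y \<beta>)))"
      by (rule sum.remove) (use fT clT that in auto)
    also have "\<dots> \<le> (\<Sum>\<beta>\<in>T - {cl i}. \<bar>c \<beta>\<bar>)"
      by (auto intro!: sum_mono simp: norm_sgn mult_left_le_one_le split: if_splits)
    finally have ns: "norm (s i - s j) \<le> (\<Sum>\<beta>\<in>T - {cl i}. \<bar>c \<beta>\<bar>)" .
    have "q i - q j = (b j - b i) + \<gamma> *\<^sub>R (s i - s j)"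
      by (simp add: q_def yji algebra_simps)
    then have "norm (q i - q j) \<le> norm (b j - b i) + \<gamma> * norm (s i - s j)"
      using g by (metis norm_scaleR norm_triangle_ineq abs_of_nonneg)
    also have "\<dots> \<le> norm (b i - b j) + \<gamma> * (\<Sum>\<beta>\<in>T - {cl i}. \<bar>c \<beta>\<bar>)"
      using ns g by (simp add: norm_minus_commute mult_left_mono)
    also have "\<dots> \<le> \<gamma> * (N (cl i) * w i j)"
      using cond[rule_format, OF that(1) jn, OF conjI[OF clj[symmetric] False]] unfolding c_def C_def N_def by simp
    finally have nq: "norm (q i - q j) \<le> \<gamma> * (N (cl i) * w i j)" .
    have "- (norm (d i - d j) * norm (q i - q j)) \<le> inner (d i - d j) (q i - q j)"
      using Cauchy_Schwarz_ineq2[of "d i - d j" "q i - q j"] by (simp add: abs_le_iff)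
    moreover have "norm (d i - d j) * norm (q i - q j) \<le> norm (d i - d j) * (\<gamma> * (N (cl i) * w i j))"
      using nq by (simp add: mult_left_mono)
    ultimately have "- (norm (d i - d j) * (\<gamma> * (N (cl i) * w i j))) \<le> inner (d i - d j) (q i - q j)" by linarith
    then have "- (\<gamma> * (w i j * norm (d i - d j))) * N (cl i) \<le> inner (d i - d j) (q i - q j)"
      by (simp add: algebra_simps)
    then show ?thesis using Npos[OF that(1)] by (simp add: pos_le_divide_eq)
  qed
  have qsum: "(\<Sum>i<n. inner (d i) (y i - b i)) + \<gamma> * (\<Sum>i<n. inner (d i) (s i)) = (\<Sum>i<n. inner (d i) (q i))"
    by (simp add: q_def inner_add_right sum.distrib sum_distrib_left)
  have F67: "2 * (\<Sum>i<n. inner (d i) (q i)) \<ge> - (\<gamma> * (\<Sum>i<n. \<Sum>j\<in>C (cl i). w i j * norm (d i - d j)))"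
  proof -
    have "(\<Sum>i<n. \<Sum>j\<in>C (cl i). - (\<gamma> * (w i j * norm (d i - d j)))) \<le> (\<Sum>i<n. \<Sum>j\<in>C (cl i). inner (d i - d j) (q i - q j) / N (cl i))"
      by (intro sum_mono) (use F7 in auto)
    then show ?thesis using F6 by (simp add: sum_negf sum_distrib_left)
  qed
  have "cc_obj b n w \<gamma> x \<le> cc_obj b n w \<gamma> y" using opt unfolding is_cc_opt_def by blast
  then have "(\<Sum>i<n. (norm (x i - b i))\<^sup>2) + \<gamma> * pen n w x \<le> (\<Sum>i<n. (norm (y i - b i))\<^sup>2) + \<gamma> * pen n w y"
    unfolding obj by simp
  moreover have "\<gamma> * pen n w x \<ge> \<gamma> * (pen n w y + (\<Sum>i<n. \<Sum>j<n. w i j * inner (Z i j) (d i - d j))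
                        + (\<Sum>i<n. \<Sum>j\<in>C (cl i). w i j * norm (d i - d j)))"
    using P g by (rule mult_left_mono)
  moreover have "\<gamma> * (pen n w y + (\<Sum>i<n. \<Sum>j<n. w i j * inner (Z i j) (d i - d j))
                        + (\<Sum>i<n. \<Sum>j\<in>C (cl i). w i j * norm (d i - d j)))
     = \<gamma> * pen n w y + 2 * (\<gamma> * (\<Sum>i<n. inner (d i) (s i))) + \<gamma> * (\<Sum>i<n. \<Sum>j\<in>C (cl i). w i j * norm (d i - d j))"
    unfolding F5 by (simp add: distrib_left)
  ultimately have "(\<Sum>i<n. (norm (d i))\<^sup>2) \<le> 0"
    using Q qsum F67 by linarith
  then have d0: "\<forall>i\<in>{..<n}. (norm (d i))\<^sup>2 = 0"
    using sum_nonneg_eq_0_iff[of "{..<n}" "\<lambda>i. (norm (d i))\<^sup>2"]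
    by (simp add: order_antisym sum_nonneg)
  show ?thesis
  proof (intro allI impI)
    fix i j assume "i < n" "j < n" "cl i = cl j"
    then have "x i = y i" "x j = y j" using d0 by (auto simp: d_def)
    then show "x i = x j" using \<open>cl i = cl j\<close> by (simp add: y_def)
  qed
qed


lemma core_pert:
  fixes b x :: "nat \<Rightarrow> 'v::real_inner" and cl :: "nat \<Rightarrow> nat"
  assumes w: "\<forall>i<n. \<forall>j<n. w i j = w j i \<and> 0 \<le> w i j" and g: "0 \<le> \<gamma>"
    and opt: "is_cc_opt b n w \<gamma> x"
    and const: "\<forall>i<n. \<forall>j<n. cl i = cl j \<longrightarrow> x i = x j"
    and i0: "i0 < n"
  shows "real (card {l. l<n \<and> cl l = cl i0}) * norm (x i0 - (1 / real (card {l. l<n \<and> cl l = cl i0})) *\<^sub>R (\<Sum>l\<in>{l. l<n \<and> cl l = cl i0}. b l))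
     \<le> \<gamma> * (\<Sum>i\<in>{l. l<n \<and> cl l = cl i0}. \<Sum>j\<in>{j. j<n \<and> cl j \<noteq> cl i0}. w i j)"
proof -
  define A where "A = {l. l<n \<and> cl l = cl i0}"
  define B where "B = {j. j<n \<and> cl j \<noteq> cl i0}"
  define nA where "nA = real (card A)"
  define c where "c = (1 / nA) *\<^sub>R (\<Sum>l\<in>A. b l)"
  define X where "X = x i0"
  define v where "v = c - X"
  define D where "D = norm v"
  define S where "S = (\<Sum>i\<in>A. \<Sum>j\<in>B. w i j)"
  define ind where "ind i = (if i < n \<and> cl i = cl i0 then 1 else 0::real)" for i
  have finA: "finite A" and finB: "finite B" unfolding A_def B_def by auto
  have "i0 \<in> A" using i0 by (simp add: A_def)
  then have "card A > 0" using finA card_gt_0_iff by auto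
  then have nApos: "nA > 0" unfolding nA_def by simp
  have xA: "x i = X" if "i \<in> A" for i
  proof -
    have "i < n" "cl i = cl i0" using that by (auto simp: A_def)
    then show ?thesis using const i0 unfolding X_def by blast
  qed
  have wsym: "\<And>i j. i<n \<Longrightarrow> j<n \<Longrightarrow> w i j = w j i" using w by auto
  have wnn: "\<And>i j. i<n \<Longrightarrow> j<n \<Longrightarrow> 0 \<le> w i j" using w by auto
  have Snn: "S \<ge> 0" unfolding S_def
  proof (intro sum_nonneg)
    fix i j assume "i \<in> A" "j \<in> B"
    then have "i < n" "j < n" by (auto simp: A_def B_def)
    then show "0 \<le> w i j" by (rule wnn)
  qed
  have obj: "\<And>u. cc_obj b n w \<gamma> u = (1/2) * (\<Sum>i<n. (norm (u i - b i))\<^sup>2) + (\<gamma>/2) * pen n w u"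
    by (rule cc_obj_pen) (use w in auto)
  have sumind: "(\<Sum>i<n. ind i * F i) = (\<Sum>i\<in>A. F i)" for F :: "nat \<Rightarrow> real"
  proof -
    have "A = {i\<in>{..<n}. cl i = cl i0}" by (auto simp: A_def)
    then have "(\<Sum>i\<in>A. F i) = (\<Sum>i<n. if cl i = cl i0 then F i else 0)"
      by (subst sum.inter_filter[symmetric]) auto
    moreover have "(\<Sum>i<n. ind i * F i) = (\<Sum>i<n. if cl i = cl i0 then F i else 0)"
      by (intro sum.cong[OF refl]) (simp add: ind_def)
    ultimately show ?thesis by simp
  qed
  have sumind': "(\<Sum>i<n. (1 - ind i) * F i) = (\<Sum>i\<in>B. F i)" for F :: "nat \<Rightarrow> real"
  proof -
    have "B = {i\<in>{..<n}. cl i \<noteq> cl i0}" by (auto simp: B_def)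
    then have "(\<Sum>i\<in>B. F i) = (\<Sum>i<n. if cl i \<noteq> cl i0 then F i else 0)"
      by (subst sum.inter_filter[symmetric]) auto
    moreover have "(\<Sum>i<n. (1 - ind i) * F i) = (\<Sum>i<n. if cl i \<noteq> cl i0 then F i else 0)"
      by (intro sum.cong[OF refl]) (simp add: ind_def)
    ultimately show ?thesis by simp
  qed
  have key: "nA * D\<^sup>2 - (1/2) * nA * t * D\<^sup>2 \<le> \<gamma> * D * S" if t: "0 < t" "t \<le> 1" for t
  proof -
    define u where "u i = x i + (ind i * t) *\<^sub>R v" for i
    have q1: "(norm (u i - b i))\<^sup>2 = (norm (x i - b i))\<^sup>2 + ind i * (t\<^sup>2 * D\<^sup>2 + 2 * t * inner (X - b i) v)" for i
    proof -
      have e: "u i - b i = (x i - b i) + (ind i * t) *\<^sub>R v" by (simp add: u_def)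
      have "(norm (u i - b i))\<^sup>2 = (norm (x i - b i))\<^sup>2 + (ind i * t)\<^sup>2 * D\<^sup>2 + 2 * (ind i * t) * inner (x i - b i) v"
        by (subst e, subst norm_add_sq) (simp add: D_def power_mult_distrib)
      moreover have "ind i * inner (x i - b i) v = ind i * inner (X - b i) v"
        using xA[of i] by (cases "i < n \<and> cl i = cl i0") (auto simp: ind_def A_def)
      moreover have "(ind i)\<^sup>2 = ind i" by (simp add: ind_def)
      ultimately show ?thesis by (simp add: algebra_simps power_mult_distrib)
    qed
    have "(\<Sum>i<n. (norm (u i - b i))\<^sup>2) = (\<Sum>i<n. (norm (x i - b i))\<^sup>2) + (\<Sum>i\<in>A. t\<^sup>2 * D\<^sup>2 + 2 * t * inner (X - b i) v)"
      by (simp add: q1 sum.distrib sumind)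
    also have "(\<Sum>i\<in>A. t\<^sup>2 * D\<^sup>2 + 2 * t * inner (X - b i) v) = nA * t\<^sup>2 * D\<^sup>2 + 2 * t * inner (\<Sum>i\<in>A. X - b i) v"
      by (simp add: sum.distrib sum_distrib_left inner_sum_left nA_def)
    also have "(\<Sum>i\<in>A. X - b i) = - (nA *\<^sub>R v)"
      using nApos by (simp add: sum_subtractf v_def c_def nA_def algebra_simps sum_constant_scaleR)
    finally have QQ: "(\<Sum>i<n. (norm (u i - b i))\<^sup>2) = (\<Sum>i<n. (norm (x i - b i))\<^sup>2) + nA * t\<^sup>2 * D\<^sup>2 - 2 * t * nA * D\<^sup>2"
      by (simp add: D_def power2_norm_eq_inner)
    have p1: "norm (u i - u j) \<le> norm (x i - x j) + t * D * (ind i * (1 - ind j) + ind j * (1 - ind i))" for i j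
    proof -
      have "u i - u j = (x i - x j) + ((ind i - ind j) * t) *\<^sub>R v" by (simp add: u_def algebra_simps)
      then have "norm (u i - u j) \<le> norm (x i - x j) + \<bar>ind i - ind j\<bar> * t * D"
        using norm_triangle_ineq[of "x i - x j" "((ind i - ind j) * t) *\<^sub>R v"] t by (simp add: D_def abs_mult)
      moreover have "\<bar>ind i - ind j\<bar> = ind i * (1 - ind j) + ind j * (1 - ind i)" by (simp add: ind_def)
      ultimately show ?thesis by (simp add: algebra_simps)
    qed
    have "pen n w u \<le> (\<Sum>i<n. \<Sum>j<n. w i j * (norm (x i - x j) + t * D * (ind i * (1 - ind j) + ind j * (1 - ind i))))"
      unfolding pen_def by (intro sum_mono mult_left_mono) (use p1 wnn in auto)
    also have "\<dots> = pen n w x + t * D * ((\<Sum>i<n. \<Sum>j<n. w i j * (ind i * (1 - ind j))) + (\<Sum>i<n. \<Sum>j<n. w i j * (ind j * (1 - ind i))))"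
    proof -
      have eq: "w i j * (norm (x i - x j) + t * D * (ind i * (1 - ind j) + ind j * (1 - ind i)))
          = w i j * norm (x i - x j) + t * D * (w i j * (ind i * (1 - ind j))) + t * D * (w i j * (ind j * (1 - ind i)))" for i j
        by (simp add: algebra_simps)
      show ?thesis by (simp only: eq sum.distrib pen_def sum_distrib_left[symmetric] distrib_left) (simp add: sum_distrib_left ac_simps)
    qed
    also have "(\<Sum>i<n. \<Sum>j<n. w i j * (ind i * (1 - ind j))) = S"
    proof -
      have "(\<Sum>i<n. \<Sum>j<n. w i j * (ind i * (1 - ind j))) = (\<Sum>i<n. ind i * (\<Sum>j<n. (1 - ind j) * w i j))"
        by (simp add: sum_distrib_left algebra_simps)
      also have "\<dots> = (\<Sum>i\<in>A. \<Sum>j\<in>B. w i j)" by (simp add: sumind sumind')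
      finally show ?thesis by (simp add: S_def)
    qed
    also have "(\<Sum>i<n. \<Sum>j<n. w i j * (ind j * (1 - ind i))) = S"
    proof -
      have "(\<Sum>i<n. \<Sum>j<n. w i j * (ind j * (1 - ind i))) = (\<Sum>j<n. \<Sum>i<n. w i j * (ind j * (1 - ind i)))"
        by (rule sum.swap)
      also have "\<dots> = (\<Sum>j<n. \<Sum>i<n. w j i * (ind j * (1 - ind i)))"
        by (intro sum.cong[OF refl]) (simp add: wsym)
      also have "\<dots> = (\<Sum>j<n. ind j * (\<Sum>i<n. (1 - ind i) * w j i))"
        by (simp add: sum_distrib_left algebra_simps)
      also have "\<dots> = (\<Sum>i\<in>A. \<Sum>j\<in>B. w i j)" by (simp add: sumind sumind')
      finally show ?thesis by (simp add: S_def)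
    qed
    finally have PP: "pen n w u \<le> pen n w x + 2 * t * D * S" by simp
    have "cc_obj b n w \<gamma> x \<le> cc_obj b n w \<gamma> u" using opt unfolding is_cc_opt_def by blast
    then have "(\<Sum>i<n. (norm (x i - b i))\<^sup>2) + \<gamma> * pen n w x \<le> (\<Sum>i<n. (norm (u i - b i))\<^sup>2) + \<gamma> * pen n w u"
      unfolding obj by simp
    moreover have "\<gamma> * pen n w u \<le> \<gamma> * pen n w x + 2 * t * (\<gamma> * D * S)"
      using mult_left_mono[OF PP g] by (simp add: algebra_simps)
    ultimately have "0 \<le> nA * t\<^sup>2 * D\<^sup>2 - 2 * t * nA * D\<^sup>2 + 2 * t * (\<gamma> * D * S)"
      using QQ by linarith
    then have "0 \<le> t * (nA * t * D\<^sup>2 - 2 * nA * D\<^sup>2 + 2 * (\<gamma> * D * S))"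
      by (simp add: algebra_simps power2_eq_square)
    then have "0 \<le> nA * t * D\<^sup>2 - 2 * nA * D\<^sup>2 + 2 * (\<gamma> * D * S)"
      using t by (simp add: zero_le_mult_iff)
    then show ?thesis by (simp add: algebra_simps)
  qed
  have "nA * D \<le> \<gamma> * S"
  proof (cases "nA * D \<le> \<gamma> * S")
    case False
    have "D \<ge> 0" by (simp add: D_def)
    moreover have "D \<noteq> 0" using False g Snn by auto
    ultimately have Dpos: "D > 0" by simp
    define t where "t = (nA * D - \<gamma> * S) / (nA * D)"
    have t0: "0 < t" using False Dpos nApos by (simp add: t_def)
    have t1: "t \<le> 1" using Dpos nApos g Snn by (simp add: t_def divide_le_eq_1)
    have "nA * D\<^sup>2 - (1/2) * nA * t * D\<^sup>2 \<le> \<gamma> * D * S" using key[OF t0 t1] .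
    moreover have "nA * t * D\<^sup>2 = D * (nA * D - \<gamma> * S)"
      using Dpos nApos by (simp add: t_def power2_eq_square field_simps)
    ultimately have "D * (nA * D) - (1/2) * (D * (nA * D - \<gamma> * S)) \<le> D * (\<gamma> * S)"
      by (simp add: algebra_simps power2_eq_square)
    then have "D * ((1/2) * (nA * D) + (1/2) * (\<gamma> * S)) \<le> D * (\<gamma> * S)"
      by (simp add: algebra_simps)
    then have "(1/2) * (nA * D) + (1/2) * (\<gamma> * S) \<le> \<gamma> * S"
      using Dpos by simp
    then show ?thesis by simp
  qed simp
  then show ?thesis
    unfolding nA_def D_def v_def c_def X_def S_def A_def B_def by (simp add: norm_minus_commute)
qed


lemma cluster_fun:
  fixes a :: "nat \<Rightarrow> 'a"
  assumes part: "partition_on (a ` {..<n}) (V ` {1..K})" and inj: "inj_on V {1..K}"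
  obtains cl where "\<forall>i<n. cl i \<in> {1..K} \<and> a i \<in> V (cl i)"
    and "\<forall>i<n. \<forall>\<alpha>\<in>{1..K}. a i \<in> V \<alpha> \<longrightarrow> \<alpha> = cl i"
    and "\<forall>\<alpha>\<in>{1..K}. \<exists>i<n. cl i = \<alpha>"
    and "\<forall>\<alpha>\<in>{1..K}. Iset a n V \<alpha> = {l. l < n \<and> cl l = \<alpha>}"
proof -
  have U: "\<Union>(V ` {1..K}) = a ` {..<n}" using part by (simp add: partition_on_def)
  have disj: "V \<alpha> \<inter> V \<beta> = {}" if "\<alpha> \<in> {1..K}" "\<beta> \<in> {1..K}" "\<alpha> \<noteq> \<beta>" for \<alpha> \<beta>
  proof -
    have "V \<alpha> \<noteq> V \<beta>" using inj that inj_on_def by metis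
    moreover have "disjoint (V ` {1..K})" using part by (simp add: partition_on_def)
    ultimately show ?thesis using that by (intro disjointD) auto
  qed
  have ne: "V \<alpha> \<noteq> {}" if "\<alpha> \<in> {1..K}" for \<alpha>
  proof -
    have "{} \<notin> V ` {1..K}" using part by (simp add: partition_on_def)
    then show ?thesis using that by auto
  qed
  have ex: "\<exists>\<alpha>. \<alpha> \<in> {1..K} \<and> a i \<in> V \<alpha>" if "i < n" for i
    using U that by blast
  define cl where "cl i = (SOME \<alpha>. \<alpha> \<in> {1..K} \<and> a i \<in> V \<alpha>)" for i
  have c1: "\<forall>i<n. cl i \<in> {1..K} \<and> a i \<in> V (cl i)"
    unfolding cl_def using ex by (metis (mono_tags, lifting) someI_ex)
  have c2: "\<forall>i<n. \<forall>\<alpha>\<in>{1..K}. a i \<in> V \<alpha> \<longrightarrow> \<alpha> = cl i"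
  proof (intro allI impI ballI)
    fix i \<alpha> assume h: "i < n" "\<alpha> \<in> {1..K}" "a i \<in> V \<alpha>"
    then have "cl i \<in> {1..K}" "a i \<in> V (cl i)" using c1 by auto
    then show "\<alpha> = cl i" using disj[of \<alpha> "cl i"] h by (rule_tac ccontr) auto
  qed
  have c3: "\<forall>\<alpha>\<in>{1..K}. \<exists>i<n. cl i = \<alpha>"
  proof
    fix \<alpha> assume "\<alpha> \<in> {1..K}"
    then obtain v where "v \<in> V \<alpha>" using ne by blast
    then have "v \<in> a ` {..<n}" using U \<open>\<alpha> \<in> {1..K}\<close> by blast
    then obtain i where "i < n" "v = a i" by auto
    then show "\<exists>i<n. cl i = \<alpha>" using c2 \<open>v \<in> V \<alpha>\<close> \<open>\<alpha> \<in> {1..K}\<close> by metis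
  qed
  have c4: "\<forall>\<alpha>\<in>{1..K}. Iset a n V \<alpha> = {l. l < n \<and> cl l = \<alpha>}"
    unfolding Iset_def using c1 c2 by auto
  show ?thesis using that c1 c2 c3 c4 by blast
qed


lemma mv_sum: fixes P :: "real^'d^'m" shows "P *v (\<Sum>i\<in>S. f i) = (\<Sum>i\<in>S. P *v f i)"
  by (induction S rule: infinite_finite_induct) (auto simp: matrix_vector_right_distrib)

lemma det_main:
  fixes a :: "nat \<Rightarrow> real^'d" and P :: "real^'d^'m" and x :: "nat \<Rightarrow> real^'m"
  assumes part: "partition_on (a ` {..<n}) (V ` {1..K})" and inj: "inj_on V {1..K}"
    and w: "\<forall>i<n. \<forall>j<n. w i j = w j i \<and> 0 \<le> w i j" and g: "0 \<le> \<gamma>"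
    and condA: "\<forall>\<alpha>\<in>{1..K}. \<forall>i\<in>Iset a n V \<alpha>. \<forall>j\<in>Iset a n V \<alpha>. i \<noteq> j \<longrightarrow>
        norm (P *v a i - P *v a j) \<le> \<gamma> * (real (nsz a n V \<alpha>) * w i j - mu a n V K w \<alpha> i j)"
    and opt: "proj_cc_solution P a n w \<gamma> x"
  shows "\<forall>i<n. \<forall>j<n. (\<exists>\<alpha>\<in>{1..K}. a i \<in> V \<alpha> \<and> a j \<in> V \<alpha>) \<longrightarrow> x i = x j"
    and "\<forall>\<alpha>\<in>{1..K}. \<forall>i\<in>Iset a n V \<alpha>. norm (x i - P *v cent a n V \<alpha>) \<le> \<gamma> * wbar a n V K w \<alpha>"
    and "0 < n \<Longrightarrow> (\<forall>i<n. \<forall>j<n. x i = x j) \<Longrightarrow> \<forall>i<n. x i = P *v cent a n V 0"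
proof -
  obtain cl where c1: "\<forall>i<n. cl i \<in> {1..K} \<and> a i \<in> V (cl i)"
    and c2: "\<forall>i<n. \<forall>\<alpha>\<in>{1..K}. a i \<in> V \<alpha> \<longrightarrow> \<alpha> = cl i"
    and c3: "\<forall>\<alpha>\<in>{1..K}. \<exists>i<n. cl i = \<alpha>"
    and c4: "\<forall>\<alpha>\<in>{1..K}. Iset a n V \<alpha> = {l. l < n \<and> cl l = \<alpha>}"
    using cluster_fun[OF part inj] by blast
  define b where "b i = P *v a i" for i
  have opt': "is_cc_opt b n w \<gamma> x" using opt unfolding proj_cc_solution_def b_def by simp
  have clT: "\<forall>i<n. cl i \<in> {1..K}" using c1 by blast
  have cond: "\<forall>i<n. \<forall>j<n. cl i = cl j \<and> i \<noteq> j \<longrightarrow>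
        norm (b i - b j) + \<gamma> * (\<Sum>\<beta>\<in>{1..K} - {cl i}. \<bar>(\<Sum>l\<in>{l. l<n \<and> cl l = \<beta>}. w i l) - (\<Sum>l\<in>{l. l<n \<and> cl l = \<beta>}. w j l)\<bar>)
          \<le> \<gamma> * (real (card {l. l<n \<and> cl l = cl i}) * w i j)"
  proof (intro allI impI)
    fix i j assume h0: "i < n" "j < n" "cl i = cl j \<and> i \<noteq> j"
    then have h: "i < n \<and> j < n \<and> cl i = cl j \<and> i \<noteq> j" by blast
    define \<alpha> where "\<alpha> = cl i"
    have al: "\<alpha> \<in> {1..K}" using clT h by (simp add: \<alpha>_def)
    have ij: "i \<in> Iset a n V \<alpha>" "j \<in> Iset a n V \<alpha>" using c4 al h by (auto simp: \<alpha>_def)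
    have mu_eq: "mu a n V K w \<alpha> i j = (\<Sum>\<beta>\<in>{1..K} - {\<alpha>}. \<bar>(\<Sum>l\<in>{l. l<n \<and> cl l = \<beta>}. w i l) - (\<Sum>l\<in>{l. l<n \<and> cl l = \<beta>}. w j l)\<bar>)"
      unfolding mu_def wrow_def
    proof (rule sum.cong[OF refl])
      fix \<beta> assume "\<beta> \<in> {1..K} - {\<alpha>}"
      then have "Iset a n V \<beta> = {l. l < n \<and> cl l = \<beta>}" using c4 by blast
      then show "\<bar>(\<Sum>l\<in>Iset a n V \<beta>. w i l) - (\<Sum>l\<in>Iset a n V \<beta>. w j l)\<bar> = \<bar>(\<Sum>l\<in>{l. l<n \<and> cl l = \<beta>}. w i l) - (\<Sum>l\<in>{l. l<n \<and> cl l = \<beta>}. w j l)\<bar>"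
        by simp
    qed
    have nsz_eq: "nsz a n V \<alpha> = card {l. l<n \<and> cl l = \<alpha>}" unfolding nsz_def using c4 al by simp
    have "norm (b i - b j) \<le> \<gamma> * (real (nsz a n V \<alpha>) * w i j - mu a n V K w \<alpha> i j)"
      using condA al ij h unfolding b_def by blast
    then have h2: "norm (b i - b j) \<le> \<gamma> * (real (card {l. l<n \<and> cl l = \<alpha>}) * w i j - (\<Sum>\<beta>\<in>{1..K} - {\<alpha>}. \<bar>(\<Sum>l\<in>{l. l<n \<and> cl l = \<beta>}. w i l) - (\<Sum>l\<in>{l. l<n \<and> cl l = \<beta>}. w j l)\<bar>))"
      by (simp only: mu_eq nsz_eq)
    show "norm (b i - b j) + \<gamma> * (\<Sum>\<beta>\<in>{1..K} - {cl i}. \<bar>(\<Sum>l\<in>{l. l<n \<and> cl l = \<beta>}. w i l) - (\<Sum>l\<in>{l. l<n \<and> cl l = \<beta>}. w j l)\<bar>)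
          \<le> \<gamma> * (real (card {l. l<n \<and> cl l = cl i}) * w i j)"
      using h2 by (simp add: \<alpha>_def right_diff_distrib)
  qed
  have const: "\<forall>i<n. \<forall>j<n. cl i = cl j \<longrightarrow> x i = x j"
    by (rule core_const[OF _ clT w g cond opt']) simp
  show "\<forall>i<n. \<forall>j<n. (\<exists>\<alpha>\<in>{1..K}. a i \<in> V \<alpha> \<and> a j \<in> V \<alpha>) \<longrightarrow> x i = x j"
  proof (intro allI impI)
    fix i j assume h: "i < n" "j < n" "\<exists>\<alpha>\<in>{1..K}. a i \<in> V \<alpha> \<and> a j \<in> V \<alpha>"
    then obtain \<alpha> where "\<alpha> \<in> {1..K}" "a i \<in> V \<alpha>" "a j \<in> V \<alpha>" by blast
    then have "cl i = cl j" using c2 h(1,2) by metis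
    then show "x i = x j" using const h(1,2) by blast
  qed
  show "\<forall>\<alpha>\<in>{1..K}. \<forall>i\<in>Iset a n V \<alpha>. norm (x i - P *v cent a n V \<alpha>) \<le> \<gamma> * wbar a n V K w \<alpha>"
  proof (intro ballI)
    fix \<alpha> i assume al: "\<alpha> \<in> {1..K}" and iI: "i \<in> Iset a n V \<alpha>"
    define A where "A = {l. l < n \<and> cl l = \<alpha>}"
    define B where "B = {j. j<n \<and> cl j \<noteq> \<alpha>}"
    have IA: "Iset a n V \<alpha> = A" using c4 al by (simp add: A_def)
    have i: "i < n" "cl i = \<alpha>" using iI IA by (auto simp: A_def)
    have finA: "finite A" by (simp add: A_def)
    have cA: "card A > 0" using finA i by (auto simp: A_def card_gt_0_iff)
    have pert: "real (card A) * norm (x i - (1 / real (card A)) *\<^sub>R (\<Sum>l\<in>A. b l)) \<le> \<gamma> * (\<Sum>i\<in>A. \<Sum>j\<in>B. w i j)"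
      using core_pert[OF w g opt' const i(1)] unfolding A_def B_def i(2) .
    have al0: "\<alpha> \<noteq> 0" using al by simp
    have cent_eq: "P *v cent a n V \<alpha> = (1 / real (card A)) *\<^sub>R (\<Sum>l\<in>A. b l)"
      unfolding cent_def nsz_def IA using al0 by (simp add: matrix_vector_mult_scaleR mv_sum b_def)
    have wb: "real (card A) * wbar a n V K w \<alpha> = (\<Sum>i\<in>A. \<Sum>j\<in>B. w i j)"
    proof -
      have "(\<Sum>l\<in>{1..K} - {\<alpha>}. wblock a n V w \<alpha> l) = (\<Sum>l\<in>{1..K} - {\<alpha>}. \<Sum>i\<in>A. \<Sum>j\<in>{j. j<n \<and> cl j = l}. w i j)"
        unfolding wblock_def IA
        by (rule sum.cong[OF refl]) (use c4 in auto)
      also have "\<dots> = (\<Sum>i\<in>A. \<Sum>l\<in>{1..K} - {\<alpha>}. \<Sum>j\<in>{j. j<n \<and> cl j = l}. w i j)"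
        by (rule sum.swap)
      also have "\<dots> = (\<Sum>i\<in>A. \<Sum>j\<in>B. w i j)"
      proof (rule sum.cong[OF refl])
        fix i
        have "(\<Sum>l\<in>{1..K} - {\<alpha>}. \<Sum>j\<in>{j \<in> B. cl j = l}. w i j) = (\<Sum>j\<in>B. w i j)"
          by (rule sum.group) (use clT in \<open>auto simp: B_def\<close>)
        moreover have "{j \<in> B. cl j = l} = {j. j<n \<and> cl j = l}" if "l \<in> {1..K} - {\<alpha>}" for l
          using that by (auto simp: B_def)
        ultimately show "(\<Sum>l\<in>{1..K} - {\<alpha>}. \<Sum>j\<in>{j. j<n \<and> cl j = l}. w i j) = (\<Sum>j\<in>B. w i j)"
          by (metis (no_types, lifting) sum.cong)
      qed
      finally show ?thesis unfolding wbar_def nsz_def IA using cA by simp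
    qed
    have "real (card A) * norm (x i - P *v cent a n V \<alpha>) \<le> real (card A) * (\<gamma> * wbar a n V K w \<alpha>)"
      using pert unfolding cent_eq wb[symmetric] by (simp add: algebra_simps)
    then show "norm (x i - P *v cent a n V \<alpha>) \<le> \<gamma> * wbar a n V K w \<alpha>"
      using cA by simp
  qed
  show "\<forall>i<n. x i = P *v cent a n V 0" if n0: "0 < n" and all: "\<forall>i<n. \<forall>j<n. x i = x j"
  proof -
    define cl0 where "cl0 = (\<lambda>_::nat. 0::nat)"
    have const0: "\<forall>i<n. \<forall>j<n. cl0 i = cl0 j \<longrightarrow> x i = x j" using all by blast
    have "real (card {l. l<n \<and> cl0 l = cl0 0}) * norm (x 0 - (1 / real (card {l. l<n \<and> cl0 l = cl0 0})) *\<^sub>R (\<Sum>l\<in>{l. l<n \<and> cl0 l = cl0 0}. b l))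
     \<le> \<gamma> * (\<Sum>i\<in>{l. l<n \<and> cl0 l = cl0 0}. \<Sum>j\<in>{j. j<n \<and> cl0 j \<noteq> cl0 0}. w i j)"
      by (rule core_pert[OF w g opt' const0 n0])
    moreover have "{l. l<n \<and> cl0 l = cl0 0} = {..<n}" by (auto simp: cl0_def)
    moreover have "{j. j<n \<and> cl0 j \<noteq> cl0 0} = {}" by (auto simp: cl0_def)
    ultimately have "real n * norm (x 0 - (1 / real n) *\<^sub>R (\<Sum>l<n. b l)) \<le> 0" by simp
    then have "x 0 = (1 / real n) *\<^sub>R (\<Sum>l<n. b l)" using n0
      by (simp add: mult_le_0_iff)
    moreover have "P *v cent a n V 0 = (1 / real n) *\<^sub>R (\<Sum>l<n. b l)"
      unfolding cent_def by (simp add: matrix_vector_mult_scaleR mv_sum b_def)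
    ultimately show ?thesis using all n0 by metis
  qed
qed


lemma cont_mv: "continuous_on UNIV (\<lambda>P::real^'d^'m. P *v z)"
  unfolding matrix_vector_mult_def by (intro continuous_intros)

lemma bad_sets:
  fixes M :: "(real^'d^'m) measure"
  assumes "sets M = sets borel"
  shows "{P \<in> space M. \<epsilon> < \<bar>(norm (P *v z))\<^sup>2 - 1\<bar>} \<in> sets M"
proof -
  have sp: "space M = UNIV" using sets_eq_imp_space_eq[OF assms] by simp
  have "open {P::real^'d^'m. \<epsilon> < \<bar>(norm (P *v z))\<^sup>2 - 1\<bar>}"
    by (intro open_Collect_less continuous_intros cont_mv[THEN continuous_on_subset]) auto
  then have "{P::real^'d^'m. \<epsilon> < \<bar>(norm (P *v z))\<^sup>2 - 1\<bar>} \<in> sets borel" by (rule borel_open)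
  then show ?thesis using assms sp by simp
qed


lemma jl_good:
  fixes P :: "real^'d^'m" and v :: "real^'d"
  assumes h: "\<not> (\<epsilon> < \<bar>(norm (P *v ((1 / norm v) *\<^sub>R v)))\<^sup>2 - 1\<bar>)" and v: "v \<noteq> 0" and e1: "\<epsilon> < 1"
  shows "norm (P *v v) \<le> sqrt (1 + \<epsilon>) * norm v" and "sqrt (1 - \<epsilon>) * norm v \<le> norm (P *v v)"
proof -
  define z where "z = (1 / norm v) *\<^sub>R v"
  have vz: "v = norm v *\<^sub>R z" using v by (simp add: z_def)
  have Pv: "norm (P *v v) = norm v * norm (P *v z)"
    by (subst vz) (simp add: matrix_vector_mult_scaleR)
  have b: "(norm (P *v z))\<^sup>2 \<le> 1 + \<epsilon>" "1 - \<epsilon> \<le> (norm (P *v z))\<^sup>2" using h by (auto simp: z_def abs_le_iff)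
  have "norm (P *v z) = sqrt ((norm (P *v z))\<^sup>2)" by simp
  also have "\<dots> \<le> sqrt (1 + \<epsilon>)" using b(1) by (rule real_sqrt_le_mono)
  finally have u: "norm (P *v z) \<le> sqrt (1 + \<epsilon>)" .
  have "sqrt (1 - \<epsilon>) \<le> sqrt ((norm (P *v z))\<^sup>2)" using b(2) by (rule real_sqrt_le_mono)
  then have l: "sqrt (1 - \<epsilon>) \<le> norm (P *v z)" by simp
  show "norm (P *v v) \<le> sqrt (1 + \<epsilon>) * norm v" unfolding Pv using u
    by (simp add: mult.commute mult_left_mono)
  show "sqrt (1 - \<epsilon>) * norm v \<le> norm (P *v v)" unfolding Pv using l
    by (simp add: mult.commute mult_left_mono)
qed

lemma union_bound_le:
  assumes "finite I" "\<forall>i\<in>I. B i \<in> sets M" "\<forall>i\<in>I. measure M (B i) < \<delta>"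
  shows "measure M (\<Union>i\<in>I. B i) \<le> real (card I) * \<delta>"
proof -
  have "measure M (\<Union>i\<in>I. B i) \<le> (\<Sum>i\<in>I. measure M (B i))"
    using assms by (intro measure_UNION_le) auto
  also have "\<dots> \<le> (\<Sum>i\<in>I. \<delta>)" using assms by (intro sum_mono) auto
  finally show ?thesis by simp
qed

lemma union_bound_lt:
  assumes "finite I" "I \<noteq> {}" "\<forall>i\<in>I. B i \<in> sets M" "\<forall>i\<in>I. measure M (B i) < \<delta>"
  shows "measure M (\<Union>i\<in>I. B i) < real (card I) * \<delta>"
proof -
  have "measure M (\<Union>i\<in>I. B i) \<le> (\<Sum>i\<in>I. measure M (B i))"
    using assms by (intro measure_UNION_le) auto
  also have "\<dots> < (\<Sum>i\<in>I. \<delta>)" using assms by (intro sum_strict_mono) auto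
  finally show ?thesis by simp
qed

lemma sum_lin: "2 * (\<Sum>j<n. real j) = real n * (real n - 1)"
  by (induction n) (auto simp: algebra_simps)

lemma sum_lin1: "2 * (\<Sum>b\<in>{1..K::nat}. real (b - 1)) = real K * (real K - 1)"
proof (induction K)
  case (Suc K)
  have "{1..Suc K} = insert (Suc K) {1..K}" by auto
  then show ?case using Suc by (simp add: algebra_simps)
qed simp

lemma card_S1: "real (card (SIGMA j:{..<n}. {..<j})) = real n * (real n - 1) / 2"
proof -
  have "card (SIGMA j:{..<n}. {..<j}) = (\<Sum>j<n. j)" by simp
  then have "real (card (SIGMA j:{..<n}. {..<j})) = (\<Sum>j<n. real j)" by simp
  then show ?thesis using sum_lin[of n] by simp
qed

lemma card_S2: "real (card (SIGMA b:{1..K::nat}. {1..<b})) = real K * (real K - 1) / 2"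
proof -
  have "card (SIGMA b:{1..K}. {1..<b}) = (\<Sum>b\<in>{1..K}. b - 1)" by simp
  then have "real (card (SIGMA b:{1..K}. {1..<b})) = (\<Sum>b\<in>{1..K}. real (b - 1))" by simp
  then show ?thesis using sum_lin1[of K] by simp
qed


lemma prob_event:
  fixes M :: "(real^'d^'m) measure" and a :: "nat \<Rightarrow> real^'d" and u :: "'i \<Rightarrow> real^'d"
  assumes djl: "DJL M \<epsilon> \<delta>" and inj: "inj_on a {..<n}" and fI: "finite I" and u0: "\<forall>k\<in>I. u k \<noteq> 0"
    and e1: "\<epsilon> < 1" and n2: "2 \<le> n"
    and cnt: "real n * (real n - 1) / 2 + real (card I) \<le> real n ^ 2 / 2"
  shows "\<exists>E\<in>sets M. measure M E > 1 - \<delta> * real n ^ 2 / 2 \<and>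
     (\<forall>P\<in>E. (\<forall>i<n. \<forall>j<n. i \<noteq> j \<longrightarrow> norm (P *v a i - P *v a j) \<le> sqrt (1 + \<epsilon>) * norm (a i - a j)) \<and>
             (\<forall>k\<in>I. sqrt (1 - \<epsilon>) * norm (u k) \<le> norm (P *v u k)))"
proof -
  have ps: "prob_space M" and sM: "sets M = sets borel"
    and bnd: "\<And>z::real^'d. norm z = 1 \<Longrightarrow> measure M {P \<in> space M. \<bar>(norm (P *v z))\<^sup>2 - 1\<bar> > \<epsilon>} < \<delta>"
    using djl unfolding DJL_def by auto
  interpret prob_space M by (rule ps)
  define bad where "bad v = {P \<in> space M. \<epsilon> < \<bar>(norm (P *v ((1 / norm v) *\<^sub>R v)))\<^sup>2 - 1\<bar>}" for v :: "real^'d"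
  have bad_sets: "bad v \<in> sets M" for v unfolding bad_def by (rule bad_sets[OF sM])
  have bad_meas: "measure M (bad v) < \<delta>" if "v \<noteq> 0" for v
    unfolding bad_def using bnd[of "(1 / norm v) *\<^sub>R v"] that by simp
  define S1 where "S1 = (SIGMA j:{..<n}. {..<j})"
  define B1 where "B1 = (\<Union>p\<in>S1. bad (a (snd p) - a (fst p)))"
  define B2 where "B2 = (\<Union>k\<in>I. bad (u k))"
  have fS1: "finite S1" unfolding S1_def by auto
  have "(1, 0) \<in> S1" using n2 unfolding S1_def by auto
  then have S1ne: "S1 \<noteq> {}" by auto
  have ane: "a (snd p) - a (fst p) \<noteq> 0" if "p \<in> S1" for p
  proof -
    have "snd p < n" "fst p < n" "snd p \<noteq> fst p" using that unfolding S1_def by auto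
    then show ?thesis using inj unfolding inj_on_def by auto
  qed
  have m1: "measure M B1 < real (card S1) * \<delta>"
    unfolding B1_def by (rule union_bound_lt[OF fS1 S1ne]) (use bad_sets bad_meas ane in auto)
  have m2: "measure M B2 \<le> real (card I) * \<delta>"
    unfolding B2_def by (rule union_bound_le[OF fI]) (use bad_sets bad_meas u0 in auto)
  have B1s: "B1 \<in> sets M" unfolding B1_def using fS1 bad_sets by auto
  have B2s: "B2 \<in> sets M" unfolding B2_def using fI bad_sets by auto
  have m12: "measure M (B1 \<union> B2) < (real (card S1) + real (card I)) * \<delta>"
    using measure_Un_le[OF B1s B2s] m1 m2 by (simp add: algebra_simps)
  have dpos: "\<delta> > 0" using m1 by (metis measure_nonneg not_less order_le_less_trans mult_le_0_iff of_nat_0_le_iff)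
  have cS1: "real (card S1) = real n * (real n - 1) / 2" unfolding S1_def by (rule card_S1)
  define E where "E = space M - (B1 \<union> B2)"
  have Es: "E \<in> sets M" unfolding E_def using B1s B2s by auto
  have "measure M E = 1 - measure M (B1 \<union> B2)"
    unfolding E_def using B1s B2s by (simp add: prob_compl)
  also have "\<dots> > 1 - (real (card S1) + real (card I)) * \<delta>" using m12 by simp
  finally have "measure M E > 1 - (real (card S1) + real (card I)) * \<delta>" .
  moreover have "(real (card S1) + real (card I)) * \<delta> \<le> \<delta> * real n ^ 2 / 2"
    using cnt dpos unfolding cS1 by (simp add: mult.commute mult_left_mono)
  ultimately have mE: "measure M E > 1 - \<delta> * real n ^ 2 / 2" by simp
  have good: "(\<forall>i<n. \<forall>j<n. i \<noteq> j \<longrightarrow> norm (P *v a i - P *v a j) \<le> sqrt (1 + \<epsilon>) * norm (a i - a j)) \<and>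
             (\<forall>k\<in>I. sqrt (1 - \<epsilon>) * norm (u k) \<le> norm (P *v u k))" if PE: "P \<in> E" for P
  proof (intro conjI allI impI ballI)
    have Pn: "P \<notin> bad v" if "v \<in> {a (snd p) - a (fst p) | p. p \<in> S1} \<union> u ` I" for v
      using PE that unfolding E_def B1_def B2_def by auto
    have Psp: "P \<in> space M" using PE unfolding E_def by auto
    fix k assume "k \<in> I"
    then have "\<not> (\<epsilon> < \<bar>(norm (P *v ((1 / norm (u k)) *\<^sub>R u k)))\<^sup>2 - 1\<bar>)"
      using Pn[of "u k"] Psp unfolding bad_def by auto
    then show "sqrt (1 - \<epsilon>) * norm (u k) \<le> norm (P *v u k)"
      using jl_good(2)[OF _ _ e1] u0 \<open>k \<in> I\<close> by blast
  next
    have Pn: "P \<notin> bad v" if "v \<in> {a (snd p) - a (fst p) | p. p \<in> S1} \<union> u ` I" for v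
      using PE that unfolding E_def B1_def B2_def by auto
    have Psp: "P \<in> space M" using PE unfolding E_def by auto
    have one: "norm (P *v a i - P *v a j) \<le> sqrt (1 + \<epsilon>) * norm (a i - a j)" if "j < i" "i < n" for i j
    proof -
      have "(i, j) \<in> S1" using that by (simp add: S1_def)
      then have "P \<notin> bad (a j - a i)" using Pn[of "a j - a i"] by force
      then have "\<not> (\<epsilon> < \<bar>(norm (P *v ((1 / norm (a j - a i)) *\<^sub>R (a j - a i))))\<^sup>2 - 1\<bar>)"
        using Psp unfolding bad_def by auto
      moreover have "a j - a i \<noteq> 0" using ane \<open>(i, j) \<in> S1\<close> by force
      ultimately have "norm (P *v (a j - a i)) \<le> sqrt (1 + \<epsilon>) * norm (a j - a i)"
        using jl_good(1)[OF _ _ e1] by blast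
      then show ?thesis by (simp add: matrix_vector_mult_diff_distrib norm_minus_commute)
    qed
    fix i j assume "i < n" "j < n" "i \<noteq> j"
    then show "norm (P *v a i - P *v a j) \<le> sqrt (1 + \<epsilon>) * norm (a i - a j)"
    proof (cases "j < i")
      case True then show ?thesis using one \<open>i < n\<close> by blast
    next
      case False
      then have "i < j" using \<open>i \<noteq> j\<close> by simp
      then have "norm (P *v a j - P *v a i) \<le> sqrt (1 + \<epsilon>) * norm (a j - a i)" using one \<open>j < n\<close> by blast
      then show ?thesis by (simp add: norm_minus_commute)
    qed
  qed
  show ?thesis using Es mE good by blast
qed


lemma coarsening:
  fixes a :: "nat \<Rightarrow> 'a" and x :: "nat \<Rightarrow> 'b"
  assumes part: "partition_on (a ` {..<n}) (V ` {1..K})" and inja: "inj_on a {..<n}"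
    and c1: "\<forall>i<n. cl i \<in> {1..K} \<and> a i \<in> V (cl i)"
    and c2: "\<forall>i<n. \<forall>\<alpha>\<in>{1..K}. a i \<in> V \<alpha> \<longrightarrow> \<alpha> = cl i"
    and c3: "\<forall>\<alpha>\<in>{1..K}. \<exists>i<n. cl i = \<alpha>"
    and const: "\<forall>i<n. \<forall>j<n. cl i = cl j \<longrightarrow> x i = x j"
    and nt: "\<exists>i<n. \<exists>j<n. x i \<noteq> x j"
  shows "recovers_nontrivial_coarsening a n V K x"
proof -
  have U: "\<Union>(V ` {1..K}) = a ` {..<n}" using part by (simp add: partition_on_def)
  define blk where "blk i = {\<alpha> \<in> {1..K}. \<exists>l<n. cl l = \<alpha> \<and> x l = x i}" for i
  define PP where "PP = blk ` {..<n}"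
  have inblk: "i < n \<Longrightarrow> cl i \<in> blk i" for i using c1 by (auto simp: blk_def)
  have blk_eq: "blk i = blk j" if hh: "i < n" "j < n" "\<alpha> \<in> blk i" "\<alpha> \<in> blk j" for i j \<alpha>
  proof -
    obtain l where l: "l < n" "cl l = \<alpha>" "x l = x i" using hh(3) by (auto simp: blk_def)
    obtain l' where l': "l' < n" "cl l' = \<alpha>" "x l' = x j" using hh(4) by (auto simp: blk_def)
    have "x l = x l'" using const l l' by metis
    then have "x i = x j" using l l' by simp
    then show ?thesis by (simp add: blk_def)
  qed
  have pPP: "partition_on {1..K} PP"
    unfolding partition_on_def
  proof (intro conjI)
    show "\<Union>PP = {1..K}"
    proof
      show "\<Union>PP \<subseteq> {1..K}" by (auto simp: PP_def blk_def)
      show "{1..K} \<subseteq> \<Union>PP"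
      proof
        fix \<alpha> assume "\<alpha> \<in> {1..K}"
        then obtain i where "i < n" "cl i = \<alpha>" using c3 by blast
        then show "\<alpha> \<in> \<Union>PP" using inblk[of i] by (auto simp: PP_def)
      qed
    qed
    show "disjoint PP"
    proof (rule disjointI)
      fix S T assume "S \<in> PP" "T \<in> PP" "S \<noteq> T"
      then obtain i j where "i < n" "j < n" "S = blk i" "T = blk j" by (auto simp: PP_def)
      then show "S \<inter> T = {}" using blk_eq \<open>S \<noteq> T\<close> by blast
    qed
    show "{} \<notin> PP" using inblk by (auto simp: PP_def)
  qed
  have lev: "a ` {j \<in> {..<n}. x j = x i} = (\<Union>\<alpha>\<in>blk i. V \<alpha>)" if "i < n" for i
  proof
    show "a ` {j \<in> {..<n}. x j = x i} \<subseteq> (\<Union>\<alpha>\<in>blk i. V \<alpha>)"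
    proof
      fix v assume "v \<in> a ` {j \<in> {..<n}. x j = x i}"
      then obtain j where j: "j < n" "x j = x i" "v = a j" by auto
      then have "cl j \<in> blk i" using c1 by (auto simp: blk_def)
      then show "v \<in> (\<Union>\<alpha>\<in>blk i. V \<alpha>)" using c1 j by auto
    qed
    show "(\<Union>\<alpha>\<in>blk i. V \<alpha>) \<subseteq> a ` {j \<in> {..<n}. x j = x i}"
    proof
      fix v assume "v \<in> (\<Union>\<alpha>\<in>blk i. V \<alpha>)"
      then obtain \<alpha> where al: "\<alpha> \<in> blk i" "v \<in> V \<alpha>" by auto
      then have al1: "\<alpha> \<in> {1..K}" by (auto simp: blk_def)
      obtain l where l: "l < n" "cl l = \<alpha>" "x l = x i" using al(1) by (auto simp: blk_def)
      have "v \<in> a ` {..<n}" using U al al1 by blast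
      then obtain j where j: "j < n" "v = a j" by auto
      then have "cl j = \<alpha>" using c2 al al1 by metis
      then have "x j = x l" using const j l by metis
      then show "v \<in> a ` {j \<in> {..<n}. x j = x i}" using j l by auto
    qed
  qed
  have LP: "level_partition a n x = (\<lambda>S. \<Union>\<alpha>\<in>S. V \<alpha>) ` PP"
    unfolding level_partition_def PP_def image_image using lev by (intro image_cong) auto
  have coarse: "is_coarsening (level_partition a n x) V K"
    unfolding is_coarsening_def using pPP LP by blast
  obtain i j where ij: "i < n" "j < n" "x i \<noteq> x j" using nt by blast
  define Li where "Li = a ` {l \<in> {..<n}. x l = x i}"
  define Lj where "Lj = a ` {l \<in> {..<n}. x l = x j}"
  have "a i \<in> Li" using ij by (auto simp: Li_def)
  moreover have "a i \<notin> Lj"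
  proof
    assume "a i \<in> Lj"
    then obtain l where "l < n" "x l = x j" "a i = a l" by (auto simp: Lj_def)
    then have "l = i" using inja ij unfolding inj_on_def by auto
    then show False using \<open>x l = x j\<close> ij by simp
  qed
  ultimately have LiLj: "Li \<noteq> Lj" by blast
  have "Li \<in> level_partition a n x" "Lj \<in> level_partition a n x"
    using ij unfolding level_partition_def Li_def Lj_def by auto
  moreover have "finite (level_partition a n x)" unfolding level_partition_def by simp
  ultimately have "card {Li, Lj} \<le> card (level_partition a n x)"
    by (intro card_mono) auto
  then have "card (level_partition a n x) > 1" using LiLj by simp
  then show ?thesis unfolding recovers_nontrivial_coarsening_def using coarse by blast
qed


lemma cross_arith:
  fixes \<gamma> s1 G N W NP :: real
  assumes "0 \<le> \<gamma>" "\<gamma> < s1 * G" "G \<le> N / W" "0 \<le> W" "0 \<le> s1" "s1 * N \<le> NP"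
  shows "\<gamma> * W < NP"
proof (cases "W = 0")
  case True
  then have "G \<le> 0" using assms(3) by simp
  then have "s1 * G \<le> 0" using assms(5) by (simp add: mult_nonneg_nonpos)
  then show ?thesis using assms(1,2) by linarith
next
  case False
  then have Wp: "W > 0" using assms(4) by simp
  have "\<gamma> < s1 * (N / W)" using assms(2,3,5) by (meson less_le_trans mult_left_mono)
  then have "\<gamma> * W < s1 * N" using Wp by (simp add: field_simps)
  then show ?thesis using assms(6) by linarith
qed

lemma eps_lt:
  fixes e r :: real
  assumes "0 \<le> e" "e < 1" "r > sqrt ((1 + e) / (1 - e))"
  shows "e < (r\<^sup>2 - 1) / (r\<^sup>2 + 1)"
proof -
  have q: "(1 + e) / (1 - e) \<ge> 0" using assms by (intro divide_nonneg_nonneg) auto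
  have "sqrt ((1 + e) / (1 - e)) \<ge> 0" using q by simp
  then have "(sqrt ((1 + e) / (1 - e)))\<^sup>2 < r\<^sup>2"
    using assms(3) power_strict_mono[of "sqrt ((1 + e) / (1 - e))" r 2] by simp
  then have r2: "r\<^sup>2 > (1 + e) / (1 - e)" using q by simp
  then have "r\<^sup>2 * (1 - e) > 1 + e" using assms(2) by (simp add: field_simps)
  then have "e * (r\<^sup>2 + 1) < r\<^sup>2 - 1" by (simp add: algebra_simps)
  moreover have "r\<^sup>2 + 1 > 0" using zero_le_power2[of r] by linarith
  ultimately show ?thesis by (simp add: field_simps)
qed

lemma eps_sup_lt1: "((r::real)\<^sup>2 - 1) / (r\<^sup>2 + 1) < 1"
proof -
  have "r\<^sup>2 + 1 > 0" using zero_le_power2[of r] by linarith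
  then show ?thesis by (simp add: divide_less_eq)
qed

lemma powr_calc:
  assumes "n > 0"
  shows "2 / real n powr p * real n ^ 2 / 2 = real n powr (-(p - 2))"
proof -
  have "real n ^ 2 = real n powr 2" using assms by (simp add: powr_numeral)
  then have "2 / real n powr p * real n ^ 2 / 2 = real n powr 2 / real n powr p" by simp
  also have "\<dots> = real n powr (2 - p)" by (simp add: powr_diff)
  finally show ?thesis by simp
qed


theorem theorem10:
  fixes a :: "nat \<Rightarrow> real^'d" and n K :: nat and V :: "nat \<Rightarrow> (real^'d) set"
    and w :: "nat \<Rightarrow> nat \<Rightarrow> real" and p c :: real
  defines "gmin \<equiv> gamma_min a n V K w"
    and "gmax \<equiv> gamma_max a n V K w"
    and "gmax2 \<equiv> gamma_max2 a n V K w"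
    and "eps_min \<equiv> sqrt (c * p * ln (real n) / real CARD('d))"
  defines "r \<equiv> gmax / gmin" and "r2 \<equiv> gmax2 / gmin"
  defines "eps_sup \<equiv> (r\<^sup>2 - 1) / (r\<^sup>2 + 1)" and "eps_sup2 \<equiv> (r2\<^sup>2 - 1) / (r2\<^sup>2 + 1)"
  assumes points_distinct: "inj_on a {..<n}"
    and hidden_partition: "partition_on (a ` {..<n}) (V ` {1..K})" "inj_on V {1..K}"
    and weights: "\<forall>i<n. \<forall>j<n. w i j = w j i \<and> 0 \<le> w i j"
    and distinct_centroids: "\<forall>\<alpha>\<le>K. \<forall>\<beta>\<le>K. \<alpha> \<noteq> \<beta> \<longrightarrow> cent a n V \<alpha> \<noteq> cent a n V \<beta>"
    and weight_cond: "\<forall>\<alpha>\<in>{1..K}. \<forall>i\<in>Iset a n V \<alpha>. \<forall>j\<in>Iset a n V \<alpha>. i \<noteq> j \<longrightarrow>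
         0 < w i j \<and> mu a n V K w \<alpha> i j < real (nsz a n V \<alpha>) * w i j"
    and n_large: "n > K * (K + 1)"
    and p_gt: "p > 2" and c_pos: "c > 0"
    and eps_min_lt1: "eps_min < 1"
  shows "(r > sqrt ((1 + eps_min) / (1 - eps_min)) \<longrightarrow>
      eps_min < eps_sup \<and>
      (\<forall>\<epsilon> \<gamma>h (M :: (real^'d^'m) measure).
         eps_min \<le> \<epsilon> \<and> \<epsilon> < eps_sup \<and>
         CARD('m) = nat \<lceil>c * p * ln (real n) / \<epsilon>\<^sup>2\<rceil> \<and>
         DJL M \<epsilon> (2 / real n powr p) \<and>
         sqrt (1 + \<epsilon>) * gmin \<le> \<gamma>h \<and> \<gamma>h < sqrt (1 - \<epsilon>) * gmax \<longrightarrow>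
         (\<exists>E\<in>sets M. measure M E > 1 - real n powr (-(p - 2)) \<and>
            (\<forall>P\<in>E. \<forall>x. proj_cc_solution P a n w \<gamma>h x \<longrightarrow> perfectly_recovers a n V K x)))) \<and>
    (r2 > sqrt ((1 + eps_min) / (1 - eps_min)) \<longrightarrow>
      eps_min < eps_sup2 \<and>
      (\<forall>\<epsilon> \<gamma>h (M :: (real^'d^'m) measure).
         eps_min \<le> \<epsilon> \<and> \<epsilon> < eps_sup2 \<and>
         CARD('m) = nat \<lceil>c * p * ln (real n) / \<epsilon>\<^sup>2\<rceil> \<and>
         DJL M \<epsilon> (2 / real n powr p) \<and>
         sqrt (1 + \<epsilon>) * gmin \<le> \<gamma>h \<and> \<gamma>h < sqrt (1 - \<epsilon>) * gmax2 \<longrightarrow>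
         (\<exists>E\<in>sets M. measure M E > 1 - real n powr (-(p - 2)) \<and>
            (\<forall>P\<in>E. \<forall>x. proj_cc_solution P a n w \<gamma>h x \<longrightarrow> recovers_nontrivial_coarsening a n V K x))))"
proof -
  have n0: "0 < n" using n_large by simp
  have K1: "1 \<le> K"
  proof (rule ccontr)
    assume "\<not> 1 \<le> K"
    then have "K = 0" by simp
    then have "a ` {..<n} = {}" using hidden_partition(1) by (simp add: partition_on_def)
    then show False using n0 by auto
  qed
  have "1 * 2 \<le> K * (K + 1)" using K1 by (intro mult_le_mono) auto
  then have n2: "2 \<le> n" using n_large by simp
  obtain cl where c1: "\<forall>i<n. cl i \<in> {1..K} \<and> a i \<in> V (cl i)"
    and c2: "\<forall>i<n. \<forall>\<alpha>\<in>{1..K}. a i \<in> V \<alpha> \<longrightarrow> \<alpha> = cl i"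
    and c3: "\<forall>\<alpha>\<in>{1..K}. \<exists>i<n. cl i = \<alpha>"
    and c4: "\<forall>\<alpha>\<in>{1..K}. Iset a n V \<alpha> = {l. l < n \<and> cl l = \<alpha>}"
    using cluster_fun[OF hidden_partition] by blast
  have wnn: "\<And>i j. i < n \<Longrightarrow> j < n \<Longrightarrow> 0 \<le> w i j" using weights by auto
  have wblock_nn: "0 \<le> wblock a n V w \<alpha> l" for \<alpha> l
    unfolding wblock_def by (intro sum_nonneg) (auto simp: Iset_def intro: wnn)
  have wbar_nn: "0 \<le> wbar a n V K w \<alpha>" for \<alpha>
    unfolding wbar_def using wblock_nn by (simp add: sum_nonneg)
  have "1 \<le> real n" using n0 by simp
  then have "0 \<le> ln (real n)" by (rule ln_ge_zero)
  then have "0 \<le> c * p * ln (real n) / real CARD('d)" using c_pos p_gt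
    by (intro divide_nonneg_nonneg mult_nonneg_nonneg) auto
  then have em0: "0 \<le> eps_min" unfolding eps_min_def by simp
  define Gset where "Gset = {norm (a i - a j) / (real (nsz a n V \<alpha>) * w i j - mu a n V K w \<alpha> i j) | \<alpha> i j.
      \<alpha> \<in> {1..K} \<and> i \<in> Iset a n V \<alpha> \<and> j \<in> Iset a n V \<alpha> \<and> i \<noteq> j}"
  have "Gset \<subseteq> (\<lambda>(\<alpha>, i, j). norm (a i - a j) / (real (nsz a n V \<alpha>) * w i j - mu a n V K w \<alpha> i j)) ` ({1..K} \<times> {..<n} \<times> {..<n})"
  proof
    fix v assume "v \<in> Gset"
    then obtain \<alpha> i j where h: "v = norm (a i - a j) / (real (nsz a n V \<alpha>) * w i j - mu a n V K w \<alpha> i j)"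
      "\<alpha> \<in> {1..K}" "i \<in> Iset a n V \<alpha>" "j \<in> Iset a n V \<alpha>" unfolding Gset_def by blast
    then show "v \<in> (\<lambda>(\<alpha>, i, j). norm (a i - a j) / (real (nsz a n V \<alpha>) * w i j - mu a n V K w \<alpha> i j)) ` ({1..K} \<times> {..<n} \<times> {..<n})"
      by (intro image_eqI[of _ _ "(\<alpha>, i, j)"]) (auto simp: Iset_def)
  qed
  then have finG: "finite Gset" by (rule finite_subset) auto
  have gminG: "gmin = Max Gset" by (simp add: gmin_def gamma_min_def Gset_def)
  have gmin_ge: "norm (a i - a j) / (real (nsz a n V \<alpha>) * w i j - mu a n V K w \<alpha> i j) \<le> gmin"
    if "\<alpha> \<in> {1..K}" "i \<in> Iset a n V \<alpha>" "j \<in> Iset a n V \<alpha>" "i \<noteq> j" for \<alpha> i j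
    unfolding gminG by (rule Max_ge[OF finG]) (use that in \<open>auto simp: Gset_def\<close>)
  have den_pos: "0 < real (nsz a n V \<alpha>) * w i j - mu a n V K w \<alpha> i j"
    if "\<alpha> \<in> {1..K}" "i \<in> Iset a n V \<alpha>" "j \<in> Iset a n V \<alpha>" "i \<noteq> j" for \<alpha> i j
    using weight_cond that by auto
  have nontriv: "\<exists>\<alpha>\<in>{1..K}. \<exists>i\<in>Iset a n V \<alpha>. \<exists>j\<in>Iset a n V \<alpha>. i \<noteq> j"
  proof (rule ccontr)
    assume "\<not> ?thesis"
    then have le1: "card (Iset a n V \<alpha>) \<le> 1" if "\<alpha> \<in> {1..K}" for \<alpha>
      using that by (auto simp: card_le_Suc0_iff_eq Iset_def)
    have "{..<n} \<subseteq> (\<Union>\<alpha>\<in>{1..K}. Iset a n V \<alpha>)"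
    proof
      fix i assume "i \<in> {..<n}"
      then have i: "i < n" by simp
      then have "cl i \<in> {1..K}" "a i \<in> V (cl i)" using c1 by auto
      then show "i \<in> (\<Union>\<alpha>\<in>{1..K}. Iset a n V \<alpha>)" unfolding Iset_def using i by blast
    qed
    moreover have "finite (\<Union>\<alpha>\<in>{1..K}. Iset a n V \<alpha>)" by (auto simp: Iset_def)
    ultimately have "card {..<n} \<le> card (\<Union>\<alpha>\<in>{1..K}. Iset a n V \<alpha>)"
      by (intro card_mono)
    then have "n \<le> card (\<Union>\<alpha>\<in>{1..K}. Iset a n V \<alpha>)" by simp
    also have "\<dots> \<le> (\<Sum>\<alpha>\<in>{1..K}. card (Iset a n V \<alpha>))" by (rule card_UN_le) simp
    also have "\<dots> \<le> (\<Sum>\<alpha>\<in>{1..K}. 1)" by (intro sum_mono le1)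
    also have "\<dots> = K" by simp
    finally have "n \<le> K" .
    moreover have "K \<le> K * (K + 1)" by simp
    ultimately show False using n_large by linarith
  qed
  have gmin_nn: "0 \<le> gmin"
  proof -
    obtain \<alpha> i j where h: "\<alpha> \<in> {1..K}" "i \<in> Iset a n V \<alpha>" "j \<in> Iset a n V \<alpha>" "i \<noteq> j" using nontriv by blast
    have "0 \<le> norm (a i - a j) / (real (nsz a n V \<alpha>) * w i j - mu a n V K w \<alpha> i j)"
      using den_pos[OF h] by simp
    then show ?thesis using gmin_ge[OF h] by linarith
  qed
  have condA: "\<forall>\<alpha>\<in>{1..K}. \<forall>i\<in>Iset a n V \<alpha>. \<forall>j\<in>Iset a n V \<alpha>. i \<noteq> j \<longrightarrow>
        norm (P *v a i - P *v a j) \<le> \<gamma>h * (real (nsz a n V \<alpha>) * w i j - mu a n V K w \<alpha> i j)"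
    if e0: "0 \<le> \<epsilon>" and gl: "sqrt (1 + \<epsilon>) * gmin \<le> \<gamma>h"
      and g1: "\<forall>i<n. \<forall>j<n. i \<noteq> j \<longrightarrow> norm (P *v a i - P *v a j) \<le> sqrt (1 + \<epsilon>) * norm (a i - a j)"
    for \<epsilon> \<gamma>h and P :: "real^'d^'m"
  proof (intro ballI impI)
    fix \<alpha> i j assume h: "\<alpha> \<in> {1..K}" "i \<in> Iset a n V \<alpha>" "j \<in> Iset a n V \<alpha>" "i \<noteq> j"
    define den where "den = real (nsz a n V \<alpha>) * w i j - mu a n V K w \<alpha> i j"
    have dp: "0 < den" unfolding den_def by (rule den_pos[OF h])
    have "norm (a i - a j) / den \<le> gmin" unfolding den_def by (rule gmin_ge[OF h])
    then have a1: "norm (a i - a j) \<le> gmin * den" using dp by (simp add: pos_divide_le_eq)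
    have ij: "i < n" "j < n" using h by (auto simp: Iset_def)
    have "norm (P *v a i - P *v a j) \<le> sqrt (1 + \<epsilon>) * norm (a i - a j)" using g1 ij h(4) by blast
    also have "\<dots> \<le> sqrt (1 + \<epsilon>) * (gmin * den)" by (rule mult_left_mono[OF a1]) (use e0 in simp)
    also have "\<dots> = (sqrt (1 + \<epsilon>) * gmin) * den" by simp
    also have "\<dots> \<le> \<gamma>h * den" using gl dp by (simp add: mult_right_mono)
    finally show "norm (P *v a i - P *v a j) \<le> \<gamma>h * (real (nsz a n V \<alpha>) * w i j - mu a n V K w \<alpha> i j)"
      unfolding den_def .
  qed
  define Hset where "Hset = {norm (cent a n V \<alpha> - cent a n V \<beta>) / (wbar a n V K w \<alpha> + wbar a n V K w \<beta>) | \<alpha> \<beta>.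
      1 \<le> \<alpha> \<and> \<alpha> < \<beta> \<and> \<beta> \<le> K}"
  have "Hset \<subseteq> (\<lambda>(\<alpha>, \<beta>). norm (cent a n V \<alpha> - cent a n V \<beta>) / (wbar a n V K w \<alpha> + wbar a n V K w \<beta>)) ` ({..K} \<times> {..K})"
  proof
    fix v assume "v \<in> Hset"
    then obtain \<alpha> \<beta> where h: "v = norm (cent a n V \<alpha> - cent a n V \<beta>) / (wbar a n V K w \<alpha> + wbar a n V K w \<beta>)"
      "\<alpha> < \<beta>" "\<beta> \<le> K" unfolding Hset_def by blast
    then show "v \<in> (\<lambda>(\<alpha>, \<beta>). norm (cent a n V \<alpha> - cent a n V \<beta>) / (wbar a n V K w \<alpha> + wbar a n V K w \<beta>)) ` ({..K} \<times> {..K})"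
      by (intro image_eqI[of _ _ "(\<alpha>, \<beta>)"]) auto
  qed
  then have finH: "finite Hset" by (rule finite_subset) auto
  have gmax_le: "gmax \<le> norm (cent a n V \<alpha> - cent a n V \<beta>) / (wbar a n V K w \<alpha> + wbar a n V K w \<beta>)"
    if "1 \<le> \<alpha>" "\<alpha> < \<beta>" "\<beta> \<le> K" for \<alpha> \<beta>
  proof -
    have "gmax = Min Hset" by (simp add: gmax_def gamma_max_def Hset_def)
    then show ?thesis by (simp, intro Min_le[OF finH]) (use that in \<open>auto simp: Hset_def\<close>)
  qed
  define H2set where "H2set = {norm (cent a n V 0 - cent a n V \<alpha>) / wbar a n V K w \<alpha> | \<alpha>. \<alpha> \<in> {1..K}}"
  have "H2set = (\<lambda>\<alpha>. norm (cent a n V 0 - cent a n V \<alpha>) / wbar a n V K w \<alpha>) ` {1..K}"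
    unfolding H2set_def by auto
  then have finH2: "finite H2set" and neH2: "H2set \<noteq> {}" using K1 by auto
  have "gmax2 = Max H2set" by (simp add: gmax2_def gamma_max2_def H2set_def)
  then have "gmax2 \<in> H2set" using Max_in[OF finH2 neH2] by simp
  then obtain \<alpha>1 where al1: "\<alpha>1 \<in> {1..K}" and gm2: "gmax2 = norm (cent a n V 0 - cent a n V \<alpha>1) / wbar a n V K w \<alpha>1"
    unfolding H2set_def by blast
  have eps_sup_1: "eps_sup < 1" unfolding eps_sup_def by (rule eps_sup_lt1)
  have eps_sup2_1: "eps_sup2 < 1" unfolding eps_sup2_def by (rule eps_sup_lt1)
  have cntK1: "real K * (real K + 1) < real n"
  proof -
    have "real (K * (K + 1)) < real n" using n_large by (simp only: of_nat_less_iff)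
    then show ?thesis by (simp add: distrib_left)
  qed
  have nsq: "real n ^ 2 / 2 - real n * (real n - 1) / 2 = real n / 2" by (simp add: power2_eq_square field_simps)
  show ?thesis
    apply (intro conjI impI allI)
    subgoal premises prems
      unfolding eps_sup_def by (rule eps_lt[OF em0 eps_min_lt1 prems])
    subgoal premises prems for \<epsilon> \<gamma>h M
    proof -
      have H1: "eps_min \<le> \<epsilon>" and H2: "\<epsilon> < eps_sup" and djl: "DJL M \<epsilon> (2 / real n powr p)"
        and gl: "sqrt (1 + \<epsilon>) * gmin \<le> \<gamma>h" and gu: "\<gamma>h < sqrt (1 - \<epsilon>) * gmax"
        using prems(2) by blast+
      have e0: "0 \<le> \<epsilon>" using H1 em0 by linarith
      have e1: "\<epsilon> < 1" using H2 eps_sup_1 by linarith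
      define I where "I = (SIGMA \<beta>:{1..K}. {1..<\<beta>})"
      define u where "u q = cent a n V (snd q) - cent a n V (fst q)" for q
      have fI: "finite I" unfolding I_def by auto
      have u0: "\<forall>k\<in>I. u k \<noteq> 0"
        using distinct_centroids unfolding I_def u_def by fastforce
      have cI: "real (card I) = real K * (real K - 1) / 2" unfolding I_def by (rule card_S2)
      have cnt: "real n * (real n - 1) / 2 + real (card I) \<le> real n ^ 2 / 2"
        using cntK1 nsq unfolding cI by (simp add: algebra_simps)
      obtain E where Es: "E \<in> sets M" and mE: "measure M E > 1 - 2 / real n powr p * real n ^ 2 / 2"
        and good: "\<forall>P\<in>E. (\<forall>i<n. \<forall>j<n. i \<noteq> j \<longrightarrow> norm (P *v a i - P *v a j) \<le> sqrt (1 + \<epsilon>) * norm (a i - a j)) \<and>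
             (\<forall>k\<in>I. sqrt (1 - \<epsilon>) * norm (u k) \<le> norm (P *v u k))"
        using prob_event[OF djl points_distinct fI u0 e1 n2 cnt] by blast
      show ?thesis
      proof (rule bexI[OF _ Es], rule conjI)
        show "measure M E > 1 - real n powr (-(p - 2))" using mE powr_calc[OF n0, of p] by simp
        show "\<forall>P\<in>E. \<forall>x. proj_cc_solution P a n w \<gamma>h x \<longrightarrow> perfectly_recovers a n V K x"
        proof (intro ballI allI impI)
          fix P x assume PE: "P \<in> E" and sol: "proj_cc_solution P a n w \<gamma>h x"
          have g1: "\<forall>i<n. \<forall>j<n. i \<noteq> j \<longrightarrow> norm (P *v a i - P *v a j) \<le> sqrt (1 + \<epsilon>) * norm (a i - a j)"
            using good PE by blast
          have g2: "\<forall>k\<in>I. sqrt (1 - \<epsilon>) * norm (u k) \<le> norm (P *v u k)" using good PE by blast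
          have gh0: "0 \<le> \<gamma>h" using gl gmin_nn by (meson mult_nonneg_nonneg order_trans real_sqrt_ge_zero e0 add_nonneg_nonneg zero_le_one)
          have cA: "\<forall>\<alpha>\<in>{1..K}. \<forall>i\<in>Iset a n V \<alpha>. \<forall>j\<in>Iset a n V \<alpha>. i \<noteq> j \<longrightarrow>
              norm (P *v a i - P *v a j) \<le> \<gamma>h * (real (nsz a n V \<alpha>) * w i j - mu a n V K w \<alpha> i j)"
            by (rule condA[OF e0 gl g1])
          note D = det_main[OF hidden_partition(1) hidden_partition(2) weights gh0 cA sol]
          have cross: "\<gamma>h * (wbar a n V K w \<alpha> + wbar a n V K w \<beta>) < norm (P *v cent a n V \<alpha> - P *v cent a n V \<beta>)"
            if "1 \<le> \<alpha>" "\<alpha> < \<beta>" "\<beta> \<le> K" for \<alpha> \<beta>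
          proof -
            have "(\<beta>, \<alpha>) \<in> I" using that by (simp add: I_def)
            then have "sqrt (1 - \<epsilon>) * norm (cent a n V \<alpha> - cent a n V \<beta>) \<le> norm (P *v (cent a n V \<alpha> - cent a n V \<beta>))"
              using g2 unfolding u_def by force
            then have s: "sqrt (1 - \<epsilon>) * norm (cent a n V \<alpha> - cent a n V \<beta>) \<le> norm (P *v cent a n V \<alpha> - P *v cent a n V \<beta>)"
              by (simp add: matrix_vector_mult_diff_distrib)
            show ?thesis
              by (rule cross_arith[OF gh0 gu gmax_le[OF that] _ _ s]) (use wbar_nn e1 in auto)
          qed
          show "perfectly_recovers a n V K x"
            unfolding perfectly_recovers_def
          proof (intro allI impI iffI)
            fix i j assume ij: "i < n" "j < n"
            show "\<exists>\<alpha>\<in>{1..K}. a i \<in> V \<alpha> \<and> a j \<in> V \<alpha> \<Longrightarrow> x i = x j" using D(1) ij by blast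
            assume xij: "x i = x j"
            have "cl i = cl j"
            proof (rule ccontr)
              assume ne: "cl i \<noteq> cl j"
              define \<alpha> where "\<alpha> = cl i"
              define \<beta> where "\<beta> = cl j"
              have al: "\<alpha> \<in> {1..K}" "\<beta> \<in> {1..K}" using c1 ij by (auto simp: \<alpha>_def \<beta>_def)
              have iI: "i \<in> Iset a n V \<alpha>" "j \<in> Iset a n V \<beta>" using c4 al ij by (auto simp: \<alpha>_def \<beta>_def)
              have d1: "norm (x i - P *v cent a n V \<alpha>) \<le> \<gamma>h * wbar a n V K w \<alpha>" using D(2) al iI by blast
              have d2: "norm (x j - P *v cent a n V \<beta>) \<le> \<gamma>h * wbar a n V K w \<beta>" using D(2) al iI by blast
              have "norm (P *v cent a n V \<alpha> - P *v cent a n V \<beta>) \<le> norm (x i - P *v cent a n V \<alpha>) + norm (x j - P *v cent a n V \<beta>)"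
              proof -
                have "P *v cent a n V \<alpha> - P *v cent a n V \<beta> = (P *v cent a n V \<alpha> - x i) + (x j - P *v cent a n V \<beta>)"
                  using xij by simp
                then have "norm (P *v cent a n V \<alpha> - P *v cent a n V \<beta>) \<le> norm (P *v cent a n V \<alpha> - x i) + norm (x j - P *v cent a n V \<beta>)"
                  using norm_triangle_ineq by metis
                then show ?thesis by (simp add: norm_minus_commute)
              qed
              then have tri: "norm (P *v cent a n V \<alpha> - P *v cent a n V \<beta>) \<le> \<gamma>h * (wbar a n V K w \<alpha> + wbar a n V K w \<beta>)"
                using d1 d2 by (simp add: distrib_left)
              show False
              proof (cases "\<alpha> < \<beta>")
                case True
                then show False using cross[of \<alpha> \<beta>] al tri by auto
              next
                case False
                then have "\<beta> < \<alpha>" using ne by (simp add: \<alpha>_def \<beta>_def)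
                then have "\<gamma>h * (wbar a n V K w \<beta> + wbar a n V K w \<alpha>) < norm (P *v cent a n V \<beta> - P *v cent a n V \<alpha>)"
                  using cross[of \<beta> \<alpha>] al by auto
                then show False using tri by (simp add: norm_minus_commute add.commute)
              qed
            qed
            then show "\<exists>\<alpha>\<in>{1..K}. a i \<in> V \<alpha> \<and> a j \<in> V \<alpha>" using c1 ij by metis
          qed
        qed
      qed
    qed
    subgoal premises prems
      unfolding eps_sup2_def by (rule eps_lt[OF em0 eps_min_lt1 prems])
    subgoal premises prems for \<epsilon> \<gamma>h M
    proof -
      have H1: "eps_min \<le> \<epsilon>" and H2: "\<epsilon> < eps_sup2" and djl: "DJL M \<epsilon> (2 / real n powr p)"
        and gl: "sqrt (1 + \<epsilon>) * gmin \<le> \<gamma>h" and gu: "\<gamma>h < sqrt (1 - \<epsilon>) * gmax2"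
        using prems(2) by blast+
      have e0: "0 \<le> \<epsilon>" using H1 em0 by linarith
      have e1: "\<epsilon> < 1" using H2 eps_sup2_1 by linarith
      define I where "I = {1..K}"
      define u where "u \<alpha> = cent a n V 0 - cent a n V \<alpha>" for \<alpha>
      have fI: "finite I" unfolding I_def by auto
      have u0: "\<forall>k\<in>I. u k \<noteq> 0"
        using distinct_centroids unfolding I_def u_def by fastforce
      have "2 * K \<le> K * (K + 1)" using K1 by (simp add: mult.commute mult_le_mono)
      then have "real (2 * K) \<le> real (K * (K + 1))" by (simp only: of_nat_le_iff)
      then have "2 * real K \<le> real K * (real K + 1)" by (simp add: distrib_left)
      then have cnt: "real n * (real n - 1) / 2 + real (card I) \<le> real n ^ 2 / 2"
        using cntK1 nsq unfolding I_def by (simp add: algebra_simps)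
      obtain E where Es: "E \<in> sets M" and mE: "measure M E > 1 - 2 / real n powr p * real n ^ 2 / 2"
        and good: "\<forall>P\<in>E. (\<forall>i<n. \<forall>j<n. i \<noteq> j \<longrightarrow> norm (P *v a i - P *v a j) \<le> sqrt (1 + \<epsilon>) * norm (a i - a j)) \<and>
             (\<forall>k\<in>I. sqrt (1 - \<epsilon>) * norm (u k) \<le> norm (P *v u k))"
        using prob_event[OF djl points_distinct fI u0 e1 n2 cnt] by blast
      show ?thesis
      proof (rule bexI[OF _ Es], rule conjI)
        show "measure M E > 1 - real n powr (-(p - 2))" using mE powr_calc[OF n0, of p] by simp
        show "\<forall>P\<in>E. \<forall>x. proj_cc_solution P a n w \<gamma>h x \<longrightarrow> recovers_nontrivial_coarsening a n V K x"
        proof (intro ballI allI impI)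
          fix P x assume PE: "P \<in> E" and sol: "proj_cc_solution P a n w \<gamma>h x"
          have g1: "\<forall>i<n. \<forall>j<n. i \<noteq> j \<longrightarrow> norm (P *v a i - P *v a j) \<le> sqrt (1 + \<epsilon>) * norm (a i - a j)"
            using good PE by blast
          have g2: "\<forall>k\<in>I. sqrt (1 - \<epsilon>) * norm (u k) \<le> norm (P *v u k)" using good PE by blast
          have gh0: "0 \<le> \<gamma>h" using gl gmin_nn by (meson mult_nonneg_nonneg order_trans real_sqrt_ge_zero e0 add_nonneg_nonneg zero_le_one)
          have cA: "\<forall>\<alpha>\<in>{1..K}. \<forall>i\<in>Iset a n V \<alpha>. \<forall>j\<in>Iset a n V \<alpha>. i \<noteq> j \<longrightarrow>
              norm (P *v a i - P *v a j) \<le> \<gamma>h * (real (nsz a n V \<alpha>) * w i j - mu a n V K w \<alpha> i j)"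
            by (rule condA[OF e0 gl g1])
          note D = det_main[OF hidden_partition(1) hidden_partition(2) weights gh0 cA sol]
          have const: "\<forall>i<n. \<forall>j<n. cl i = cl j \<longrightarrow> x i = x j"
          proof (intro allI impI)
            fix i j assume "i < n" "j < n" "cl i = cl j"
            then have "\<exists>\<alpha>\<in>{1..K}. a i \<in> V \<alpha> \<and> a j \<in> V \<alpha>" using c1 by metis
            then show "x i = x j" using D(1) \<open>i < n\<close> \<open>j < n\<close> by blast
          qed
          have nt: "\<exists>i<n. \<exists>j<n. x i \<noteq> x j"
          proof (rule ccontr)
            assume "\<not> (\<exists>i<n. \<exists>j<n. x i \<noteq> x j)"
            then have all: "\<forall>i<n. \<forall>j<n. x i = x j" by blast
            have x0: "\<forall>i<n. x i = P *v cent a n V 0" by (rule D(3)[OF n0 all])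
            obtain i1 where i1: "i1 < n" "cl i1 = \<alpha>1" using c3 al1 by blast
            have iI: "i1 \<in> Iset a n V \<alpha>1" using c4 al1 i1 by auto
            have "norm (x i1 - P *v cent a n V \<alpha>1) \<le> \<gamma>h * wbar a n V K w \<alpha>1" using D(2) al1 iI by blast
            then have le: "norm (P *v cent a n V 0 - P *v cent a n V \<alpha>1) \<le> \<gamma>h * wbar a n V K w \<alpha>1"
              using x0 i1 by simp
            have "sqrt (1 - \<epsilon>) * norm (cent a n V 0 - cent a n V \<alpha>1) \<le> norm (P *v (cent a n V 0 - cent a n V \<alpha>1))"
              using g2 al1 unfolding u_def I_def by blast
            then have s: "sqrt (1 - \<epsilon>) * norm (cent a n V 0 - cent a n V \<alpha>1) \<le> norm (P *v cent a n V 0 - P *v cent a n V \<alpha>1)"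
              by (simp add: matrix_vector_mult_diff_distrib)
            have "\<gamma>h * wbar a n V K w \<alpha>1 < norm (P *v cent a n V 0 - P *v cent a n V \<alpha>1)"
              by (rule cross_arith[OF gh0 gu _ wbar_nn _ s]) (use gm2 e1 in auto)
            then show False using le by linarith
          qed
          show "recovers_nontrivial_coarsening a n V K x"
            by (rule coarsening[OF hidden_partition(1) points_distinct c1 c2 c3 const nt])
        qed
      qed
    qed
    done
qed


end
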